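(* Let $n\ge 2$ and let $f$ be the $n$-ary operation on $\mathbb{Z}_8$ given by $f(\mathbf{x})=x_1x_2\cdots x_n\sum_{\alpha\in I_n}b_\alpha\mathbf{x}^\alpha$ with $b_\alpha\in\mathbb{Z}_8$. Then $f$ preserves the relation $Z$ if and only if every $b_\alpha$ is even.
   Context: $I_n$ is the set of all $n$-tuples $\alpha\in\{0,1,2\}^n$ with at most two nonzero components, and $\mathbf{x}^\alpha=x_1^{\alpha_1}\cdots x_n^{\alpha_n}$. $P_4$ is the power set of $\{1,2,3,4\}$. For $A\in P_4$, $\mathbf{g}^A\in\mathbb{Z}_8^{P_4}$ is the tuple with $B$-component $1$ if $A\subseteq B$ and $0$ otherwise. Every $\mathbf{u}\in\mathbb{Z}_8^{P_4}$ has a unique expression $\mathbf{u}=\sum_{A\in P_4}a_A\mathbf{g}^A$ with $a_A\in\mathbb{Z}_8$. $Z\subseteq \mathbb{Z}_8^{P_4}$ consists of all $\mathbf{u}$ whose coefficients satisfy: (Z1) $a_{\{2\}}\equiv 2a_{\{1\}}\pmod 4$ and $a_{\{4\}}\equiv 2a_{\{3\}}\pmod 4$; (Z2) $a_A\equiv 0\pmod 2$ whenever $|A|\ge 2$; (Z3) $a_A\equiv 0\pmod 4$ whenever $|A|\ge 2$ and $A\cap\{2,4\}\neq\emptyset$; (Z4) $a_A=0$ whenever $\{2,4\}\subseteq A$. An operation preserves $Z$ if applying it componentwise to elements of $Z$ yields an element of $Z$. *)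

theory Defs
  imports "HOL-Library.Numeral_Type"
begin

text \<open>Z_8 is the numeral type 8 (arithmetic modulo 8).
  n-tuples are functions nat => 8 indexed by {1..n}.\<close>

definition P4 :: "nat set set" where
  "P4 = Pow {1,2,3,4}"

text \<open>Elements of Z_8^{P_4}: functions nat set => 8, supported on P4.\<close>
definition gvec :: "nat set \<Rightarrow> nat set \<Rightarrow> 8" where
  "gvec A = (\<lambda>B. if B \<in> P4 \<and> A \<subseteq> B then 1 else 0)"

definition combo :: "(nat set \<Rightarrow> 8) \<Rightarrow> nat set \<Rightarrow> 8" where
  "combo a = (\<lambda>B. \<Sum>A\<in>P4. a A * gvec A B)"

definition Zrel :: "(nat set \<Rightarrow> 8) set" where
  "Zrel = {u. \<exists>a. u = combo a \<and>
      (4::8) dvd (a {2} - 2 * a {1}) \<and> (4::8) dvd (a {4} - 2 * a {3}) \<and>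
      (\<forall>A\<in>P4. 2 \<le> card A \<longrightarrow> (2::8) dvd a A) \<and>
      (\<forall>A\<in>P4. 2 \<le> card A \<and> A \<inter> {2::nat,4} \<noteq> {} \<longrightarrow> (4::8) dvd a A) \<and>
      (\<forall>A\<in>P4. {2::nat,4} \<subseteq> A \<longrightarrow> a A = 0)}"

definition I_set :: "nat \<Rightarrow> (nat \<Rightarrow> nat) set" where
  "I_set n = {\<alpha>. (\<forall>i. \<alpha> i \<le> 2) \<and> (\<forall>i. i \<notin> {1..n} \<longrightarrow> \<alpha> i = 0)
                 \<and> card {i\<in>{1..n}. \<alpha> i \<noteq> 0} \<le> 2}"

definition monom :: "nat \<Rightarrow> (nat \<Rightarrow> nat) \<Rightarrow> (nat \<Rightarrow> 8) \<Rightarrow> 8" where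
  "monom n \<alpha> x = (\<Prod>i\<in>{1..n}. x i ^ \<alpha> i)"

definition fop :: "nat \<Rightarrow> ((nat \<Rightarrow> nat) \<Rightarrow> 8) \<Rightarrow> (nat \<Rightarrow> 8) \<Rightarrow> 8" where
  "fop n b x = (\<Prod>i\<in>{1..n}. x i) * (\<Sum>\<alpha>\<in>I_set n. b \<alpha> * monom n \<alpha> x)"

definition preserves :: "nat \<Rightarrow> ((nat \<Rightarrow> 8) \<Rightarrow> 8) \<Rightarrow> bool" where
  "preserves n f \<longleftrightarrow> (\<forall>u :: nat \<Rightarrow> nat set \<Rightarrow> 8. (\<forall>i\<in>{1..n}. u i \<in> Zrel) \<longrightarrow>
      (\<lambda>B. if B \<in> P4 then f (\<lambda>i. u i B) else 0) \<in> Zrel)"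

end

theory Submission
  imports Defs
begin

lemma exhaust8: "(x::8) = 0 \<or> x = 1 \<or> x = 2 \<or> x = 3 \<or> x = 4 \<or> x = 5 \<or> x = 6 \<or> x = 7"
proof (induct x)
  case (of_int z)
  then have "z = 0 \<or> z = 1 \<or> z = 2 \<or> z = 3 \<or> z = 4 \<or> z = 5 \<or> z = 6 \<or> z = 7" by auto
  then show ?case by auto
qed
lemma eight0[simp]: "(8::8) = 0" by simp

lemma dvd2_8: "(2::8) dvd x \<longleftrightarrow> x = 0 \<or> x = 2 \<or> x = 4 \<or> x = 6"
proof
  assume "2 dvd x" then obtain k where "x = 2 * k" by blast
  then show "x = 0 \<or> x = 2 \<or> x = 4 \<or> x = 6" using exhaust8[of k] by auto
next
  have "(2::8) dvd 2" by simp
  have "(2::8) dvd 4" by (rule dvdI[of _ _ 2]) simp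
  have "(2::8) dvd 6" by (rule dvdI[of _ _ 3]) simp
  show "x = 0 \<or> x = 2 \<or> x = 4 \<or> x = 6 \<Longrightarrow> 2 dvd x" using \<open>(2::8) dvd 4\<close> \<open>(2::8) dvd 6\<close> by auto
qed

lemma dvd4_8: "(4::8) dvd x \<longleftrightarrow> x = 0 \<or> x = 4"
proof
  assume "4 dvd x" then obtain k where "x = 4 * k" by blast
  then show "x = 0 \<or> x = 4" using exhaust8[of k] by auto
next
  assume "x = 0 \<or> x = 4"
  then show "4 dvd x" by auto
qed

lemma d42: "(4::8) dvd 2 * x \<Longrightarrow> 2 dvd x"
  using exhaust8[of x] by (auto simp: dvd2_8 dvd4_8)
lemma d80: "(4::8) * x = 0 \<Longrightarrow> 2 dvd x"
  using exhaust8[of x] by (auto simp: dvd2_8)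
lemma sum_Pow_insert:
  assumes "finite S" "x \<notin> S"
  shows "sum g (Pow (insert x S)) = sum g (Pow S) + sum (\<lambda>A. g (insert x A)) (Pow S)"
proof -
  have inj: "inj_on (insert x) (Pow S)"
    using assms(2) by (auto simp: inj_on_def)
  have disj: "Pow S \<inter> insert x ` Pow S = {}" using assms(2) by auto
  have "sum g (Pow (insert x S)) = sum g (Pow S \<union> insert x ` Pow S)" by (simp add: Pow_insert)
  also have "\<dots> = sum g (Pow S) + sum g (insert x ` Pow S)"
    using assms(1) disj by (intro sum.union_disjoint) auto
  also have "sum g (insert x ` Pow S) = sum (\<lambda>A. g (insert x A)) (Pow S)"
    using inj by (simp add: sum.reindex)
  finally show ?thesis .
qed

lemma combo_Pow: "B \<in> P4 \<Longrightarrow> combo a B = sum a (Pow B)"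
proof -
  assume B: "B \<in> P4"
  have "combo a B = (\<Sum>A\<in>P4. if A \<subseteq> B then a A else 0)"
    unfolding combo_def gvec_def using B by (intro sum.cong) auto
  also have "\<dots> = sum a {A\<in>P4. A \<subseteq> B}"
    by (rule sum.inter_filter[symmetric]) (simp add: P4_def)
  also have "{A\<in>P4. A \<subseteq> B} = Pow B" using B by (auto simp: P4_def)
  finally show ?thesis .
qed

lemma combo_out: "B \<notin> P4 \<Longrightarrow> combo a B = 0"
  by (simp add: combo_def gvec_def)

lemma P4_eq: "P4 = {{}, {1}, {2}, {3}, {4}, {1,2}, {1,3}, {1,4}, {2,3}, {2,4}, {3,4}, {1,2,3}, {1,2,4}, {1,3,4}, {2,3,4}, {1,2,3,4}}"
  unfolding P4_def by (simp add: Pow_insert insert_commute)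

lemma P4_ball: "(\<forall>A\<in>P4. Q A) \<longleftrightarrow> Q {} \<and> Q {1} \<and> Q {2} \<and> Q {3} \<and> Q {4} \<and> Q {1,2} \<and> Q {1,3} \<and> Q {1,4}
    \<and> Q {2,3} \<and> Q {2,4} \<and> Q {3,4} \<and> Q {1,2,3} \<and> Q {1,2,4} \<and> Q {1,3,4} \<and> Q {2,3,4}
    \<and> Q {1,2,3,4}"
  by (simp add: P4_eq)

lemma in_P4: "{} \<in> P4" "{1} \<in> P4" "{2} \<in> P4" "{3} \<in> P4" "{4} \<in> P4" "{1,2} \<in> P4" "{1,3} \<in> P4"
  "{1,4} \<in> P4" "{2,3} \<in> P4" "{2,4} \<in> P4" "{3,4} \<in> P4" "{1,2,3} \<in> P4" "{1,2,4} \<in> P4"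
  "{1,3,4} \<in> P4" "{2,3,4} \<in> P4" "{1,2,3,4} \<in> P4"
  by (simp_all add: P4_def)

lemma sum_Pow_empty: "sum g (Pow {}) = g {}" by simp

lemma combo_vals:
  "combo a {} = a {}"
  "combo a {1} = a {} + a {1}"
  "combo a {2} = a {} + a {2}"
  "combo a {3} = a {} + a {3}"
  "combo a {4} = a {} + a {4}"
  "combo a {1,2} = a {} + a {1} + a {2} + a {1,2}"
  "combo a {1,3} = a {} + a {1} + a {3} + a {1,3}"
  "combo a {1,4} = a {} + a {1} + a {4} + a {1,4}"
  "combo a {2,3} = a {} + a {2} + a {3} + a {2,3}"
  "combo a {2,4} = a {} + a {2} + a {4} + a {2,4}"
  "combo a {3,4} = a {} + a {3} + a {4} + a {3,4}"
  "combo a {1,2,3} = a {} + a {1} + a {2} + a {3} + a {1,2} + a {1,3} + a {2,3} + a {1,2,3}"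
  "combo a {1,2,4} = a {} + a {1} + a {2} + a {4} + a {1,2} + a {1,4} + a {2,4} + a {1,2,4}"
  "combo a {1,3,4} = a {} + a {1} + a {3} + a {4} + a {1,3} + a {1,4} + a {3,4} + a {1,3,4}"
  "combo a {2,3,4} = a {} + a {2} + a {3} + a {4} + a {2,3} + a {2,4} + a {3,4} + a {2,3,4}"
  "combo a {1,2,3,4} = a {} + a {1} + a {2} + a {3} + a {4} + a {1,2} + a {1,3} + a {1,4} + a {2,3} + a {2,4} + a {3,4} + a {1,2,3} + a {1,2,4} + a {1,3,4} + a {2,3,4} + a {1,2,3,4}"
  apply -
  subgoal by (subst combo_Pow, rule in_P4(1)) (simp only: sum_Pow_empty)
  subgoal apply (subst combo_Pow, rule in_P4(2))
    apply (subst sum_Pow_insert, simp, simp)+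
    apply (simp only: sum_Pow_empty)
    apply (simp only: ac_simps)?
    done
  subgoal apply (subst combo_Pow, rule in_P4(3))
    apply (subst sum_Pow_insert, simp, simp)+
    apply (simp only: sum_Pow_empty)
    apply (simp only: ac_simps)?
    done
  subgoal apply (subst combo_Pow, rule in_P4(4))
    apply (subst sum_Pow_insert, simp, simp)+
    apply (simp only: sum_Pow_empty)
    apply (simp only: ac_simps)?
    done
  subgoal apply (subst combo_Pow, rule in_P4(5))
    apply (subst sum_Pow_insert, simp, simp)+
    apply (simp only: sum_Pow_empty)
    apply (simp only: ac_simps)?
    done
  subgoal apply (subst combo_Pow, rule in_P4(6))
    apply (subst sum_Pow_insert, simp, simp)+
    apply (simp only: sum_Pow_empty)
    apply (simp only: ac_simps)?
    done
  subgoal apply (subst combo_Pow, rule in_P4(7))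
    apply (subst sum_Pow_insert, simp, simp)+
    apply (simp only: sum_Pow_empty)
    apply (simp only: ac_simps)?
    done
  subgoal apply (subst combo_Pow, rule in_P4(8))
    apply (subst sum_Pow_insert, simp, simp)+
    apply (simp only: sum_Pow_empty)
    apply (simp only: ac_simps)?
    done
  subgoal apply (subst combo_Pow, rule in_P4(9))
    apply (subst sum_Pow_insert, simp, simp)+
    apply (simp only: sum_Pow_empty)
    apply (simp only: ac_simps)?
    done
  subgoal apply (subst combo_Pow, rule in_P4(10))
    apply (subst sum_Pow_insert, simp, simp)+
    apply (simp only: sum_Pow_empty)
    apply (simp only: ac_simps)?
    done
  subgoal apply (subst combo_Pow, rule in_P4(11))
    apply (subst sum_Pow_insert, simp, simp)+
    apply (simp only: sum_Pow_empty)
    apply (simp only: ac_simps)?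
    done
  subgoal apply (subst combo_Pow, rule in_P4(12))
    apply (subst sum_Pow_insert, simp, simp)+
    apply (simp only: sum_Pow_empty)
    apply (simp only: ac_simps)?
    done
  subgoal apply (subst combo_Pow, rule in_P4(13))
    apply (subst sum_Pow_insert, simp, simp)+
    apply (simp only: sum_Pow_empty)
    apply (simp only: ac_simps)?
    done
  subgoal apply (subst combo_Pow, rule in_P4(14))
    apply (subst sum_Pow_insert, simp, simp)+
    apply (simp only: sum_Pow_empty)
    apply (simp only: ac_simps)?
    done
  subgoal apply (subst combo_Pow, rule in_P4(15))
    apply (subst sum_Pow_insert, simp, simp)+
    apply (simp only: sum_Pow_empty)
    apply (simp only: ac_simps)?
    done
  subgoal apply (subst combo_Pow, rule in_P4(16))
    apply (subst sum_Pow_insert, simp, simp)+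
    apply (simp only: sum_Pow_empty)
    apply (simp only: ac_simps)?
    done
  done


definition sq :: "8 \<Rightarrow> 8 \<Rightarrow> 8 \<Rightarrow> 8 \<Rightarrow> bool" where
  "sq x0 x1 x2 x3 \<longleftrightarrow> (\<exists>p q r. x1 = x0 + 2*p \<and> x2 = x0 + 2*q \<and> x3 = x0 + 2*p + 2*q + 4*r)"

definition good :: "(nat set \<Rightarrow> 8) \<Rightarrow> bool" where
  "good w \<longleftrightarrow> sq (w {}) (w {2}) (w {4}) (w {2,4}) \<and> sq (w {1}) (w {1,2}) (w {1,4}) (w {1,2,4})
     \<and> sq (w {3}) (w {2,3}) (w {3,4}) (w {2,3,4}) \<and> sq (w {1,3}) (w {1,2,3}) (w {1,3,4}) (w {1,2,3,4})"

lemma sq_const: "sq c c c c"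
  unfolding sq_def by (rule exI[of _ 0], rule exI[of _ 0], rule exI[of _ 0]) simp

lemma sq_add: "sq x0 x1 x2 x3 \<Longrightarrow> sq y0 y1 y2 y3 \<Longrightarrow> sq (x0+y0) (x1+y1) (x2+y2) (x3+y3)"
  unfolding sq_def
proof (elim exE conjE)
  fix p q r p' q' r'
  assume h: "x1 = x0 + 2 * p" "x2 = x0 + 2 * q" "x3 = x0 + 2 * p + 2 * q + 4 * r"
    "y1 = y0 + 2 * p'" "y2 = y0 + 2 * q'" "y3 = y0 + 2 * p' + 2 * q' + 4 * r'"
  show "\<exists>p q r. x1 + y1 = x0 + y0 + 2 * p \<and> x2 + y2 = x0 + y0 + 2 * q \<and>
          x3 + y3 = x0 + y0 + 2 * p + 2 * q + 4 * r"
    by (rule exI[of _ "p+p'"], rule exI[of _ "q+q'"], rule exI[of _ "r+r'"]) (simp add: h algebra_simps)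
qed

lemma sq_mult: "sq x0 x1 x2 x3 \<Longrightarrow> sq y0 y1 y2 y3 \<Longrightarrow> sq (x0*y0) (x1*y1) (x2*y2) (x3*y3)"
  unfolding sq_def
proof (elim exE conjE)
  fix p q r p' q' r'
  assume h: "x1 = x0 + 2 * p" "x2 = x0 + 2 * q" "x3 = x0 + 2 * p + 2 * q + 4 * r"
    "y1 = y0 + 2 * p'" "y2 = y0 + 2 * q'" "y3 = y0 + 2 * p' + 2 * q' + 4 * r'"
  show "\<exists>pa qa ra. x1 * y1 = x0 * y0 + 2 * pa \<and> x2 * y2 = x0 * y0 + 2 * qa \<and>
          x3 * y3 = x0 * y0 + 2 * pa + 2 * qa + 4 * ra"
    by (rule exI[of _ "p*y0 + p'*x0 + 2*p*p'"], rule exI[of _ "q*y0 + q'*x0 + 2*q*q'"],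
        rule exI[of _ "r'*x0 + r*y0 + p*q' + q*p' + 2*(p*r' + q*r' + r*p' + r*q') + 4*r*r'"])
       (simp add: h algebra_simps)
qed

lemma good_const: "good (\<lambda>B. c)"
  unfolding good_def by (simp add: sq_const)

lemma good_add: "good f \<Longrightarrow> good g \<Longrightarrow> good (\<lambda>B. f B + g B)"
  unfolding good_def by (simp add: sq_add)

lemma good_mult: "good f \<Longrightarrow> good g \<Longrightarrow> good (\<lambda>B. f B * g B)"
  unfolding good_def by (simp add: sq_mult)

lemma good_prod: "finite K \<Longrightarrow> (\<And>k. k \<in> K \<Longrightarrow> good (h k)) \<Longrightarrow> good (\<lambda>B. \<Prod>k\<in>K. h k B)"
proof (induction K rule: finite_induct)
  case empty
  then show ?case by (simp add: good_const)
next
  case (insert x F)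
  then show ?case using good_mult[of "h x" "\<lambda>B. \<Prod>k\<in>F. h k B"] by simp
qed

lemma good_sum: "finite K \<Longrightarrow> (\<And>k. k \<in> K \<Longrightarrow> good (h k)) \<Longrightarrow> good (\<lambda>B. \<Sum>k\<in>K. h k B)"
proof (induction K rule: finite_induct)
  case empty
  then show ?case by (simp add: good_const)
next
  case (insert x F)
  then show ?case using good_add[of "h x" "\<lambda>B. \<Sum>k\<in>F. h k B"] by simp
qed

lemma good_pow: "good f \<Longrightarrow> good (\<lambda>B. f B ^ m)"
proof (induction m)
  case 0
  then show ?case by (simp add: good_const)
next
  case (Suc m)
  then show ?case using good_mult[of f "\<lambda>B. f B ^ m"] by simp
qed

lemma diff_to_eq: "(x::8) - y = z \<Longrightarrow> x = y + z"
proof -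
  assume h: "x - y = z"
  from h[symmetric] show "x = y + z" by simp
qed

lemma use_ball: "(\<forall>A\<in>P4. Q A \<longrightarrow> R A) \<Longrightarrow> A \<in> P4 \<Longrightarrow> Q A \<Longrightarrow> R A" by blast

lemma Z_good:
  assumes "u \<in> Zrel"
  shows "good u"
proof -
  obtain a where u: "u = combo a" and c1: "(4::8) dvd (a {2} - 2 * a {1})"
    and c2: "(4::8) dvd (a {4} - 2 * a {3})"
    and c2': "\<forall>A\<in>P4. 2 \<le> card A \<longrightarrow> (2::8) dvd a A"
    and c3: "\<forall>A\<in>P4. 2 \<le> card A \<and> A \<inter> {2::nat,4} \<noteq> {} \<longrightarrow> (4::8) dvd a A"
    and c4: "\<forall>A\<in>P4. {2::nat,4} \<subseteq> A \<longrightarrow> a A = 0"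
    using assms unfolding Zrel_def mem_Collect_eq by (elim exE conjE) (rule that)
  obtain k2 where "a {2} - 2 * a {1} = 4 * k2" using c1 by (rule dvdE)
  then have k2: "a {2} = 2 * a {1} + 4 * k2" by (rule diff_to_eq)
  obtain k4 where "a {4} - 2 * a {3} = 4 * k4" using c2 by (rule dvdE)
  then have k4: "a {4} = 2 * a {3} + 4 * k4" by (rule diff_to_eq)
  have c3': "(4::8) dvd a {1,2}" "(4::8) dvd a {1,4}" "(4::8) dvd a {2,3}" "(4::8) dvd a {3,4}"
     "(4::8) dvd a {1,2,3}" "(4::8) dvd a {1,3,4}"
    apply (rule use_ball[OF c3 in_P4(6)], simp)
    apply (rule use_ball[OF c3 in_P4(8)], simp)
    apply (rule use_ball[OF c3 in_P4(9)], simp)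
    apply (rule use_ball[OF c3 in_P4(11)], simp)
    apply (rule use_ball[OF c3 in_P4(12)], simp)
    apply (rule use_ball[OF c3 in_P4(14)], simp)
    done
  have z: "a {2,4} = 0" "a {1,2,4} = 0" "a {2,3,4} = 0" "a {1,2,3,4} = 0"
    apply (rule use_ball[OF c4 in_P4(10)], simp)
    apply (rule use_ball[OF c4 in_P4(13)], simp)
    apply (rule use_ball[OF c4 in_P4(15)], simp)
    apply (rule use_ball[OF c4 in_P4(16)], simp)
    done
  obtain k12 where k12: "a {1,2} = 4 * k12" using c3'(1) by (rule dvdE)
  obtain k14 where k14: "a {1,4} = 4 * k14" using c3'(2) by (rule dvdE)
  obtain k23 where k23: "a {2,3} = 4 * k23" using c3'(3) by (rule dvdE)
  obtain k34 where k34: "a {3,4} = 4 * k34" using c3'(4) by (rule dvdE)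
  obtain k123 where k123: "a {1,2,3} = 4 * k123" using c3'(5) by (rule dvdE)
  obtain k134 where k134: "a {1,3,4} = 4 * k134" using c3'(6) by (rule dvdE)
  note E = k2 k4 z k12 k14 k23 k34 k123 k134
  have s1: "sq (u {}) (u {2}) (u {4}) (u {2,4})"
    unfolding sq_def u combo_vals
    apply (rule exI[of _ "a {1} + 2*k2"], rule exI[of _ "a {3} + 2*k4"], rule exI[of _ 0])
    apply (simp only: E)
    apply (simp add: algebra_simps)
    done
  have s2: "sq (u {1}) (u {1,2}) (u {1,4}) (u {1,2,4})"
    unfolding sq_def u combo_vals
    apply (rule exI[of _ "a {1} + 2*k2 + 2*k12"], rule exI[of _ "a {3} + 2*k4 + 2*k14"], rule exI[of _ 0])
    apply (simp only: E)
    apply (simp add: algebra_simps)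
    done
  have s3: "sq (u {3}) (u {2,3}) (u {3,4}) (u {2,3,4})"
    unfolding sq_def u combo_vals
    apply (rule exI[of _ "a {1} + 2*k2 + 2*k23"], rule exI[of _ "a {3} + 2*k4 + 2*k34"], rule exI[of _ 0])
    apply (simp only: E)
    apply (simp add: algebra_simps)
    done
  have s4: "sq (u {1,3}) (u {1,2,3}) (u {1,3,4}) (u {1,2,3,4})"
    unfolding sq_def u combo_vals
    apply (rule exI[of _ "a {1} + 2*k2 + 2*k12 + 2*k23 + 2*k123"], rule exI[of _ "a {3} + 2*k4 + 2*k14 + 2*k34 + 2*k134"], rule exI[of _ 0])
    apply (simp only: E)
    apply (simp add: algebra_simps)
    done
  show ?thesis unfolding good_def using s1 s2 s3 s4 by blast
qed


definition mob2 :: "8 \<Rightarrow> 8 \<Rightarrow> 8 \<Rightarrow> 8 \<Rightarrow> nat set \<Rightarrow> 8" where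
  "mob2 x0 x1 x3 x13 A = (if 1 \<in> A \<and> 3 \<in> A then x13 - x1 - x3 + x0 else if 1 \<in> A then x1 - x0
     else if 3 \<in> A then x3 - x0 else x0)"

lemma two_dvd_four: "(2::8) dvd 4 * x"
  by (rule dvdI[of _ _ "2*x"]) simp

lemma good_Z:
  assumes "good w"
  shows "(\<lambda>B. if B \<in> P4 then 2 * w B else 0) \<in> Zrel"
proof -
  obtain p0 q0 r0 p1 q1 r1 p3 q3 r3 p13 q13 r13 where
    e: "w {2} = w {} + 2*p0" "w {4} = w {} + 2*q0" "w {2,4} = w {} + 2*p0 + 2*q0 + 4*r0"
      "w {1,2} = w {1} + 2*p1" "w {1,4} = w {1} + 2*q1" "w {1,2,4} = w {1} + 2*p1 + 2*q1 + 4*r1"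
      "w {2,3} = w {3} + 2*p3" "w {3,4} = w {3} + 2*q3" "w {2,3,4} = w {3} + 2*p3 + 2*q3 + 4*r3"
      "w {1,2,3} = w {1,3} + 2*p13" "w {1,3,4} = w {1,3} + 2*q13"
      "w {1,2,3,4} = w {1,3} + 2*p13 + 2*q13 + 4*r13"
    using assms unfolding good_def sq_def by (elim exE conjE) (rule that)
  define a where "a A = (if 2 \<in> A \<and> 4 \<in> A then 0 else if 2 \<in> A then 4 * mob2 p0 p1 p3 p13 A
      else if 4 \<in> A then 4 * mob2 q0 q1 q3 q13 A else 2 * mob2 (w {}) (w {1}) (w {3}) (w {1,3}) A)"
    for A :: "nat set"
  have vals: "\<forall>B\<in>P4. 2 * w B = combo a B"
    unfolding P4_ball combo_vals
    apply (simp only: e)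
    apply (simp add: a_def mob2_def algebra_simps)
    done
  have cm: "(\<lambda>B. if B \<in> P4 then 2 * w B else 0) = combo a"
  proof (rule ext)
    fix B
    show "(if B \<in> P4 then 2 * w B else 0) = combo a B"
      using vals by (cases "B \<in> P4") (simp_all add: combo_out)
  qed
  have "a {2} - 2 * a {1} = 4 * (p0 - (w {1} - w {}))"
    by (simp add: a_def mob2_def algebra_simps)
  then have c1: "(4::8) dvd (a {2} - 2 * a {1})" by simp
  have "a {4} - 2 * a {3} = 4 * (q0 - (w {3} - w {}))"
    by (simp add: a_def mob2_def algebra_simps)
  then have c2: "(4::8) dvd (a {4} - 2 * a {3})" by simp
  have c2': "\<forall>A\<in>P4. 2 \<le> card A \<longrightarrow> (2::8) dvd a A"
    by (simp add: a_def two_dvd_four)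
  have c3: "\<forall>A\<in>P4. 2 \<le> card A \<and> A \<inter> {2::nat,4} \<noteq> {} \<longrightarrow> (4::8) dvd a A"
    by (auto simp: a_def)
  have c4: "\<forall>A\<in>P4. {2::nat,4} \<subseteq> A \<longrightarrow> a A = 0"
    by (auto simp: a_def)
  show ?thesis unfolding Zrel_def using cm c1 c2 c2' c3 c4 by blast
qed

lemma fin_I: "finite (I_set n)"
proof -
  have "I_set n \<subseteq> {f. \<forall>x. (x \<in> {1..n} \<longrightarrow> f x \<in> {0..2}) \<and> (x \<notin> {1..n} \<longrightarrow> f x = 0)}"
    unfolding I_set_def by auto
  moreover have "finite {f. \<forall>x. (x \<in> {1..n} \<longrightarrow> f x \<in> {0..2::nat}) \<and> (x \<notin> {1..n} \<longrightarrow> f x = 0)}"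
    by (rule finite_set_of_finite_funs) auto
  ultimately show ?thesis by (rule finite_subset)
qed

lemma backward:
  assumes "\<forall>\<alpha>\<in>I_set n. (2::8) dvd b \<alpha>"
  shows "preserves n (fop n b)"
proof -
  have "\<forall>\<alpha>\<in>I_set n. \<exists>k. b \<alpha> = 2 * k" using assms unfolding dvd_def .
  then obtain b' where b': "\<And>\<alpha>. \<alpha> \<in> I_set n \<Longrightarrow> b \<alpha> = 2 * b' \<alpha>"
    using bchoice[of "I_set n" "\<lambda>\<alpha> k. b \<alpha> = 2 * k"] by auto
  show ?thesis unfolding preserves_def
  proof (intro allI impI)
    fix u :: "nat \<Rightarrow> nat set \<Rightarrow> 8"
    assume u: "\<forall>i\<in>{1..n}. u i \<in> Zrel"
    define s where "s B = (\<Prod>i\<in>{1..n}. u i B) * (\<Sum>\<alpha>\<in>I_set n. b' \<alpha> * monom n \<alpha> (\<lambda>i. u i B))" for B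
    have gu: "\<And>i. i \<in> {1..n} \<Longrightarrow> good (u i)" using u Z_good by blast
    have gs: "good s" unfolding s_def monom_def
      by (intro good_mult good_prod good_sum good_const good_pow gu fin_I finite_atLeastAtMost)
    have sumeq: "(\<Sum>\<alpha>\<in>I_set n. b \<alpha> * monom n \<alpha> x) = 2 * (\<Sum>\<alpha>\<in>I_set n. b' \<alpha> * monom n \<alpha> x)" for x
      by (simp add: sum_distrib_left b' mult.assoc cong: sum.cong)
    have "(\<lambda>B. if B \<in> P4 then fop n b (\<lambda>i. u i B) else 0) = (\<lambda>B. if B \<in> P4 then 2 * s B else 0)"
      by (rule ext) (simp add: fop_def s_def sumeq mult.left_commute)
    then show "(\<lambda>B. if B \<in> P4 then fop n b (\<lambda>i. u i B) else 0) \<in> Zrel"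
      using good_Z[OF gs] by simp
  qed
qed

definition sv :: "nat set \<Rightarrow> 8" where
  "sv B = 1 + (if 1 \<in> B then 1 else 0) + (if 2 \<in> B then 2 else 0)"
definition tv :: "nat set \<Rightarrow> 8" where
  "tv B = 1 + (if 3 \<in> B then 1 else 0) + (if 4 \<in> B then 2 else 0)"
definition U1 :: "nat set \<Rightarrow> 8" where "U1 = (\<lambda>B. if B \<in> P4 then sv B else 0)"
definition U2 :: "nat set \<Rightarrow> 8" where "U2 = (\<lambda>B. if B \<in> P4 then tv B else 0)"
definition ONE :: "nat set \<Rightarrow> 8" where "ONE = (\<lambda>B. if B \<in> P4 then 1 else 0)"

lemma fun_eq_combo: "(\<forall>B\<in>P4. f B = combo a B) \<Longrightarrow> (\<lambda>B. if B \<in> P4 then f B else 0) = combo a"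
  by (rule ext) (simp add: combo_out)

lemma U1_Z: "U1 \<in> Zrel"
proof -
  define a where "a A = (if 3 \<in> A \<or> 4 \<in> A \<or> (1 \<in> A \<and> 2 \<in> A) then 0 else if 1 \<in> A then 1
     else if 2 \<in> A then 2 else (1::8))" for A :: "nat set"
  have "\<forall>B\<in>P4. sv B = combo a B"
    unfolding P4_ball combo_vals by (simp add: a_def sv_def)
  then have cm: "U1 = combo a" unfolding U1_def by (rule fun_eq_combo)
  have c1: "(4::8) dvd (a {2} - 2 * a {1})" by (simp add: a_def)
  have c2: "(4::8) dvd (a {4} - 2 * a {3})" by (simp add: a_def)
  have c2': "\<forall>A\<in>P4. 2 \<le> card A \<longrightarrow> (2::8) dvd a A"
    unfolding P4_ball by (simp add: a_def)
  have c3: "\<forall>A\<in>P4. 2 \<le> card A \<and> A \<inter> {2::nat,4} \<noteq> {} \<longrightarrow> (4::8) dvd a A"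
    unfolding P4_ball by (simp add: a_def)
  have c4: "\<forall>A\<in>P4. {2::nat,4} \<subseteq> A \<longrightarrow> a A = 0"
    unfolding P4_ball by (simp add: a_def)
  show ?thesis unfolding Zrel_def using cm c1 c2 c2' c3 c4 by blast
qed

lemma U2_Z: "U2 \<in> Zrel"
proof -
  define a where "a A = (if 1 \<in> A \<or> 2 \<in> A \<or> (3 \<in> A \<and> 4 \<in> A) then 0 else if 3 \<in> A then 1
     else if 4 \<in> A then 2 else (1::8))" for A :: "nat set"
  have "\<forall>B\<in>P4. tv B = combo a B"
    unfolding P4_ball combo_vals by (simp add: a_def tv_def)
  then have cm: "U2 = combo a" unfolding U2_def by (rule fun_eq_combo)
  have c1: "(4::8) dvd (a {2} - 2 * a {1})" by (simp add: a_def)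
  have c2: "(4::8) dvd (a {4} - 2 * a {3})" by (simp add: a_def)
  have c2': "\<forall>A\<in>P4. 2 \<le> card A \<longrightarrow> (2::8) dvd a A"
    unfolding P4_ball by (simp add: a_def)
  have c3: "\<forall>A\<in>P4. 2 \<le> card A \<and> A \<inter> {2::nat,4} \<noteq> {} \<longrightarrow> (4::8) dvd a A"
    unfolding P4_ball by (simp add: a_def)
  have c4: "\<forall>A\<in>P4. {2::nat,4} \<subseteq> A \<longrightarrow> a A = 0"
    unfolding P4_ball by (simp add: a_def)
  show ?thesis unfolding Zrel_def using cm c1 c2 c2' c3 c4 by blast
qed

lemma ONE_Z: "ONE \<in> Zrel"
proof -
  define a where "a A = (if A = {} then 1 else (0::8))" for A :: "nat set"
  have "\<forall>B\<in>P4. 1 = combo a B"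
    unfolding P4_ball combo_vals by (simp add: a_def)
  then have cm: "ONE = combo a" unfolding ONE_def by (rule fun_eq_combo)
  have c1: "(4::8) dvd (a {2} - 2 * a {1})" by (simp add: a_def)
  have c2: "(4::8) dvd (a {4} - 2 * a {3})" by (simp add: a_def)
  have c2': "\<forall>A\<in>P4. 2 \<le> card A \<longrightarrow> (2::8) dvd a A"
    by (simp add: a_def)
  have c3: "\<forall>A\<in>P4. 2 \<le> card A \<and> A \<inter> {2::nat,4} \<noteq> {} \<longrightarrow> (4::8) dvd a A"
    by (simp add: a_def)
  have c4: "\<forall>A\<in>P4. {2::nat,4} \<subseteq> A \<longrightarrow> a A = 0"
    by (auto simp add: a_def)
  show ?thesis unfolding Zrel_def using cm c1 c2 c2' c3 c4 by blast
qed

lemma prod_two: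
  assumes "finite K" "i \<in> K" "j \<in> K" "i \<noteq> j" "\<forall>k\<in>K - {i,j}. f k = 1"
  shows "prod f K = f i * f j"
proof -
  have K: "K = insert i (insert j (K - {i,j}))" using assms by auto
  have "prod f K = f i * (f j * prod f (K - {i,j}))"
    by (subst K) (simp add: assms)
  also have "prod f (K - {i,j}) = 1" using assms(5) by simp
  finally show ?thesis by simp
qed

lemma fop_two:
  assumes "i \<in> {1..n}" "j \<in> {1..n}" "i \<noteq> j" "\<forall>k\<in>{1..n} - {i,j}. x k = 1"
  shows "fop n b x = (\<Sum>\<alpha>\<in>I_set n. b \<alpha> * (x i ^ Suc (\<alpha> i) * x j ^ Suc (\<alpha> j)))"
proof -
  have p: "(\<Prod>k\<in>{1..n}. x k) = x i * x j"
    by (rule prod_two) (use assms in auto)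
  have m: "monom n \<alpha> x = x i ^ \<alpha> i * x j ^ \<alpha> j" for \<alpha>
    unfolding monom_def by (rule prod_two) (use assms in auto)
  show ?thesis unfolding fop_def p m
    by (simp add: sum_distrib_left algebra_simps)
qed

lemma L_mod2:
  assumes "\<forall>\<alpha>\<in>I. (2::8) dvd (h \<alpha> - c \<alpha>)" "2 dvd (\<Sum>\<alpha>\<in>I. b \<alpha> * h \<alpha>)"
  shows "2 dvd (\<Sum>\<alpha>\<in>I. b \<alpha> * c \<alpha>)"
proof -
  have "(\<Sum>\<alpha>\<in>I. b \<alpha> * h \<alpha>) = (\<Sum>\<alpha>\<in>I. b \<alpha> * c \<alpha>) + (\<Sum>\<alpha>\<in>I. b \<alpha> * (h \<alpha> - c \<alpha>))"
    by (simp add: sum.distrib[symmetric] algebra_simps)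
  moreover have "2 dvd (\<Sum>\<alpha>\<in>I. b \<alpha> * (h \<alpha> - c \<alpha>))"
    using assms(1) by (intro dvd_sum) simp
  ultimately show ?thesis using assms(2) by (simp add: dvd_add_left_iff)
qed

lemma L_mod4:
  assumes "\<forall>\<alpha>\<in>I. (4::8) dvd (h \<alpha> - 2 * c \<alpha>)" "4 dvd (\<Sum>\<alpha>\<in>I. b \<alpha> * h \<alpha>)"
  shows "2 dvd (\<Sum>\<alpha>\<in>I. b \<alpha> * c \<alpha>)"
proof -
  have "(\<Sum>\<alpha>\<in>I. b \<alpha> * h \<alpha>) = 2 * (\<Sum>\<alpha>\<in>I. b \<alpha> * c \<alpha>) + (\<Sum>\<alpha>\<in>I. b \<alpha> * (h \<alpha> - 2 * c \<alpha>))"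
    by (simp add: sum.distrib[symmetric] sum_distrib_left algebra_simps)
  moreover have "4 dvd (\<Sum>\<alpha>\<in>I. b \<alpha> * (h \<alpha> - 2 * c \<alpha>))"
    using assms(1) by (intro dvd_sum) simp
  ultimately have "4 dvd 2 * (\<Sum>\<alpha>\<in>I. b \<alpha> * c \<alpha>)" using assms(2) by (simp add: dvd_add_left_iff)
  then show ?thesis by (rule d42)
qed

lemma L_mod8:
  assumes "\<forall>\<alpha>\<in>I. h \<alpha> = (4::8) * c \<alpha>" "(\<Sum>\<alpha>\<in>I. b \<alpha> * h \<alpha>) = 0"
  shows "2 dvd (\<Sum>\<alpha>\<in>I. b \<alpha> * c \<alpha>)"
proof -
  have "(\<Sum>\<alpha>\<in>I. b \<alpha> * h \<alpha>) = 4 * (\<Sum>\<alpha>\<in>I. b \<alpha> * c \<alpha>)"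
    using assms(1) by (simp add: sum_distrib_left algebra_simps)
  then show ?thesis using assms(2) by (intro d80) simp
qed

definition Bf :: "nat \<Rightarrow> nat \<Rightarrow> 8" where
  "Bf p x = (if p = 0 then 1 else if p = 1 then (if x = 1 then 0 else 1) else (if x = 2 then 1 else 0))"

lemma tests:
  assumes pres: "preserves n (fop n b)" and ij: "i \<in> {1..n}" "j \<in> {1..n}" "i \<noteq> j"
  shows "2 dvd (\<Sum>\<alpha>\<in>I_set n. b \<alpha> * (Bf 0 (\<alpha> i) * Bf 0 (\<alpha> j)))"
    and "2 dvd (\<Sum>\<alpha>\<in>I_set n. b \<alpha> * (Bf 0 (\<alpha> i) * Bf 1 (\<alpha> j)))"
    and "2 dvd (\<Sum>\<alpha>\<in>I_set n. b \<alpha> * (Bf 1 (\<alpha> i) * Bf 0 (\<alpha> j)))"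
    and "2 dvd (\<Sum>\<alpha>\<in>I_set n. b \<alpha> * (Bf 2 (\<alpha> i) * Bf 0 (\<alpha> j)))"
    and "2 dvd (\<Sum>\<alpha>\<in>I_set n. b \<alpha> * (Bf 0 (\<alpha> i) * Bf 2 (\<alpha> j)))"
    and "2 dvd (\<Sum>\<alpha>\<in>I_set n. b \<alpha> * (Bf 1 (\<alpha> i) * Bf 1 (\<alpha> j)))"
    and "2 dvd (\<Sum>\<alpha>\<in>I_set n. b \<alpha> * (Bf 2 (\<alpha> i) * Bf 1 (\<alpha> j)))"
    and "2 dvd (\<Sum>\<alpha>\<in>I_set n. b \<alpha> * (Bf 1 (\<alpha> i) * Bf 2 (\<alpha> j)))"
    and "2 dvd (\<Sum>\<alpha>\<in>I_set n. b \<alpha> * (Bf 2 (\<alpha> i) * Bf 2 (\<alpha> j)))"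
proof -
  define u where "u k = (if k = i then U1 else if k = j then U2 else ONE)" for k
  have uZ: "\<forall>k\<in>{1..n}. u k \<in> Zrel" using U1_Z U2_Z ONE_Z by (simp add: u_def)
  define F where "F = (\<lambda>B. if B \<in> P4 then fop n b (\<lambda>k. u k B) else 0)"
  have "F \<in> Zrel" using pres uZ unfolding preserves_def F_def by blast
  then obtain a where Fa: "F = combo a" and c1: "(4::8) dvd (a {2} - 2 * a {1})"
    and c2: "(4::8) dvd (a {4} - 2 * a {3})"
    and c2': "\<forall>A\<in>P4. 2 \<le> card A \<longrightarrow> (2::8) dvd a A"
    and c3: "\<forall>A\<in>P4. 2 \<le> card A \<and> A \<inter> {2::nat,4} \<noteq> {} \<longrightarrow> (4::8) dvd a A"
    and c4: "\<forall>A\<in>P4. {2::nat,4} \<subseteq> A \<longrightarrow> a A = 0"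
    unfolding Zrel_def mem_Collect_eq by (elim exE conjE) (rule that)
  have Fval: "F B = (\<Sum>\<alpha>\<in>I_set n. b \<alpha> * (sv B ^ Suc (\<alpha> i) * tv B ^ Suc (\<alpha> j)))"
    if B: "B \<in> P4" for B
  proof -
    have "F B = fop n b (\<lambda>k. u k B)" using B by (simp add: F_def)
    also have "\<dots> = (\<Sum>\<alpha>\<in>I_set n. b \<alpha> * (u i B ^ Suc (\<alpha> i) * u j B ^ Suc (\<alpha> j)))"
      by (rule fop_two) (use ij B in \<open>auto simp: u_def ONE_def\<close>)
    also have "\<dots> = (\<Sum>\<alpha>\<in>I_set n. b \<alpha> * (sv B ^ Suc (\<alpha> i) * tv B ^ Suc (\<alpha> j)))"
      using ij B by (simp add: u_def U1_def U2_def)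
    finally show ?thesis .
  qed
  have rng: "\<And>\<alpha>. \<alpha> \<in> I_set n \<Longrightarrow> \<alpha> i \<le> 2 \<and> \<alpha> j \<le> 2" by (simp add: I_set_def)
  have e0: "a {1,3} = (\<Sum>\<alpha>\<in>I_set n. b \<alpha> * ((sv {1,3} ^ Suc (\<alpha> i) * tv {1,3} ^ Suc (\<alpha> j)) - (sv {3} ^ Suc (\<alpha> i) * tv {3} ^ Suc (\<alpha> j)) - (sv {1} ^ Suc (\<alpha> i) * tv {1} ^ Suc (\<alpha> j)) + (sv {} ^ Suc (\<alpha> i) * tv {} ^ Suc (\<alpha> j))))"
  proof -
    have "a {1,3} = F {1,3} - F {3} - F {1} + F {}" unfolding Fa combo_vals by (simp add: algebra_simps)
    also have "\<dots> = (\<Sum>\<alpha>\<in>I_set n. b \<alpha> * ((sv {1,3} ^ Suc (\<alpha> i) * tv {1,3} ^ Suc (\<alpha> j)) - (sv {3} ^ Suc (\<alpha> i) * tv {3} ^ Suc (\<alpha> j)) - (sv {1} ^ Suc (\<alpha> i) * tv {1} ^ Suc (\<alpha> j)) + (sv {} ^ Suc (\<alpha> i) * tv {} ^ Suc (\<alpha> j))))"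
      unfolding Fval[OF in_P4(7)] Fval[OF in_P4(4)] Fval[OF in_P4(2)] Fval[OF in_P4(1)] by (simp add: sum_subtractf sum.distrib algebra_simps)
    finally show ?thesis .
  qed
  have n0: "\<forall>\<alpha>\<in>I_set n. (2::8) dvd (((sv {1,3} ^ Suc (\<alpha> i) * tv {1,3} ^ Suc (\<alpha> j)) - (sv {3} ^ Suc (\<alpha> i) * tv {3} ^ Suc (\<alpha> j)) - (sv {1} ^ Suc (\<alpha> i) * tv {1} ^ Suc (\<alpha> j)) + (sv {} ^ Suc (\<alpha> i) * tv {} ^ Suc (\<alpha> j))) - Bf 0 (\<alpha> i) * Bf 0 (\<alpha> j))"
  proof
    fix \<alpha> assume "\<alpha> \<in> I_set n"
    then have "\<alpha> i = 0 \<or> \<alpha> i = 1 \<or> \<alpha> i = 2" "\<alpha> j = 0 \<or> \<alpha> j = 1 \<or> \<alpha> j = 2"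
      using rng by force+
    then show "(2::8) dvd (((sv {1,3} ^ Suc (\<alpha> i) * tv {1,3} ^ Suc (\<alpha> j)) - (sv {3} ^ Suc (\<alpha> i) * tv {3} ^ Suc (\<alpha> j)) - (sv {1} ^ Suc (\<alpha> i) * tv {1} ^ Suc (\<alpha> j)) + (sv {} ^ Suc (\<alpha> i) * tv {} ^ Suc (\<alpha> j))) - Bf 0 (\<alpha> i) * Bf 0 (\<alpha> j))"
      by (elim disjE) (simp_all add: sv_def tv_def Bf_def dvd2_8 dvd4_8)
  qed
  have d0: "2 dvd a {1,3}" by (rule use_ball[OF c2' in_P4(7)]) simp
  have r0: "2 dvd (\<Sum>\<alpha>\<in>I_set n. b \<alpha> * (Bf 0 (\<alpha> i) * Bf 0 (\<alpha> j)))"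
    using d0 unfolding e0 by (rule L_mod2[OF n0])
  have e1: "a {1,4} = (\<Sum>\<alpha>\<in>I_set n. b \<alpha> * ((sv {1,4} ^ Suc (\<alpha> i) * tv {1,4} ^ Suc (\<alpha> j)) - (sv {4} ^ Suc (\<alpha> i) * tv {4} ^ Suc (\<alpha> j)) - (sv {1} ^ Suc (\<alpha> i) * tv {1} ^ Suc (\<alpha> j)) + (sv {} ^ Suc (\<alpha> i) * tv {} ^ Suc (\<alpha> j))))"
  proof -
    have "a {1,4} = F {1,4} - F {4} - F {1} + F {}" unfolding Fa combo_vals by (simp add: algebra_simps)
    also have "\<dots> = (\<Sum>\<alpha>\<in>I_set n. b \<alpha> * ((sv {1,4} ^ Suc (\<alpha> i) * tv {1,4} ^ Suc (\<alpha> j)) - (sv {4} ^ Suc (\<alpha> i) * tv {4} ^ Suc (\<alpha> j)) - (sv {1} ^ Suc (\<alpha> i) * tv {1} ^ Suc (\<alpha> j)) + (sv {} ^ Suc (\<alpha> i) * tv {} ^ Suc (\<alpha> j))))"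
      unfolding Fval[OF in_P4(8)] Fval[OF in_P4(5)] Fval[OF in_P4(2)] Fval[OF in_P4(1)] by (simp add: sum_subtractf sum.distrib algebra_simps)
    finally show ?thesis .
  qed
  have n1: "\<forall>\<alpha>\<in>I_set n. (4::8) dvd (((sv {1,4} ^ Suc (\<alpha> i) * tv {1,4} ^ Suc (\<alpha> j)) - (sv {4} ^ Suc (\<alpha> i) * tv {4} ^ Suc (\<alpha> j)) - (sv {1} ^ Suc (\<alpha> i) * tv {1} ^ Suc (\<alpha> j)) + (sv {} ^ Suc (\<alpha> i) * tv {} ^ Suc (\<alpha> j))) - 2 * (Bf 0 (\<alpha> i) * Bf 1 (\<alpha> j)))"
  proof
    fix \<alpha> assume "\<alpha> \<in> I_set n"
    then have "\<alpha> i = 0 \<or> \<alpha> i = 1 \<or> \<alpha> i = 2" "\<alpha> j = 0 \<or> \<alpha> j = 1 \<or> \<alpha> j = 2"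
      using rng by force+
    then show "(4::8) dvd (((sv {1,4} ^ Suc (\<alpha> i) * tv {1,4} ^ Suc (\<alpha> j)) - (sv {4} ^ Suc (\<alpha> i) * tv {4} ^ Suc (\<alpha> j)) - (sv {1} ^ Suc (\<alpha> i) * tv {1} ^ Suc (\<alpha> j)) + (sv {} ^ Suc (\<alpha> i) * tv {} ^ Suc (\<alpha> j))) - 2 * (Bf 0 (\<alpha> i) * Bf 1 (\<alpha> j)))"
      by (elim disjE) (simp_all add: sv_def tv_def Bf_def dvd2_8 dvd4_8)
  qed
  have d1: "4 dvd a {1,4}" by (rule use_ball[OF c3 in_P4(8)]) simp
  have r1: "2 dvd (\<Sum>\<alpha>\<in>I_set n. b \<alpha> * (Bf 0 (\<alpha> i) * Bf 1 (\<alpha> j)))"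
    using d1 unfolding e1 by (rule L_mod4[OF n1])
  have e2: "a {2,3} = (\<Sum>\<alpha>\<in>I_set n. b \<alpha> * ((sv {2,3} ^ Suc (\<alpha> i) * tv {2,3} ^ Suc (\<alpha> j)) - (sv {3} ^ Suc (\<alpha> i) * tv {3} ^ Suc (\<alpha> j)) - (sv {2} ^ Suc (\<alpha> i) * tv {2} ^ Suc (\<alpha> j)) + (sv {} ^ Suc (\<alpha> i) * tv {} ^ Suc (\<alpha> j))))"
  proof -
    have "a {2,3} = F {2,3} - F {3} - F {2} + F {}" unfolding Fa combo_vals by (simp add: algebra_simps)
    also have "\<dots> = (\<Sum>\<alpha>\<in>I_set n. b \<alpha> * ((sv {2,3} ^ Suc (\<alpha> i) * tv {2,3} ^ Suc (\<alpha> j)) - (sv {3} ^ Suc (\<alpha> i) * tv {3} ^ Suc (\<alpha> j)) - (sv {2} ^ Suc (\<alpha> i) * tv {2} ^ Suc (\<alpha> j)) + (sv {} ^ Suc (\<alpha> i) * tv {} ^ Suc (\<alpha> j))))"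
      unfolding Fval[OF in_P4(9)] Fval[OF in_P4(4)] Fval[OF in_P4(3)] Fval[OF in_P4(1)] by (simp add: sum_subtractf sum.distrib algebra_simps)
    finally show ?thesis .
  qed
  have n2: "\<forall>\<alpha>\<in>I_set n. (4::8) dvd (((sv {2,3} ^ Suc (\<alpha> i) * tv {2,3} ^ Suc (\<alpha> j)) - (sv {3} ^ Suc (\<alpha> i) * tv {3} ^ Suc (\<alpha> j)) - (sv {2} ^ Suc (\<alpha> i) * tv {2} ^ Suc (\<alpha> j)) + (sv {} ^ Suc (\<alpha> i) * tv {} ^ Suc (\<alpha> j))) - 2 * (Bf 1 (\<alpha> i) * Bf 0 (\<alpha> j)))"
  proof
    fix \<alpha> assume "\<alpha> \<in> I_set n"
    then have "\<alpha> i = 0 \<or> \<alpha> i = 1 \<or> \<alpha> i = 2" "\<alpha> j = 0 \<or> \<alpha> j = 1 \<or> \<alpha> j = 2"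
      using rng by force+
    then show "(4::8) dvd (((sv {2,3} ^ Suc (\<alpha> i) * tv {2,3} ^ Suc (\<alpha> j)) - (sv {3} ^ Suc (\<alpha> i) * tv {3} ^ Suc (\<alpha> j)) - (sv {2} ^ Suc (\<alpha> i) * tv {2} ^ Suc (\<alpha> j)) + (sv {} ^ Suc (\<alpha> i) * tv {} ^ Suc (\<alpha> j))) - 2 * (Bf 1 (\<alpha> i) * Bf 0 (\<alpha> j)))"
      by (elim disjE) (simp_all add: sv_def tv_def Bf_def dvd2_8 dvd4_8)
  qed
  have d2: "4 dvd a {2,3}" by (rule use_ball[OF c3 in_P4(9)]) simp
  have r2: "2 dvd (\<Sum>\<alpha>\<in>I_set n. b \<alpha> * (Bf 1 (\<alpha> i) * Bf 0 (\<alpha> j)))"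
    using d2 unfolding e2 by (rule L_mod4[OF n2])
  have e3: "a {1,2,3} = (\<Sum>\<alpha>\<in>I_set n. b \<alpha> * ((sv {1,2,3} ^ Suc (\<alpha> i) * tv {1,2,3} ^ Suc (\<alpha> j)) - (sv {2,3} ^ Suc (\<alpha> i) * tv {2,3} ^ Suc (\<alpha> j)) - (sv {1,3} ^ Suc (\<alpha> i) * tv {1,3} ^ Suc (\<alpha> j)) - (sv {1,2} ^ Suc (\<alpha> i) * tv {1,2} ^ Suc (\<alpha> j)) + (sv {3} ^ Suc (\<alpha> i) * tv {3} ^ Suc (\<alpha> j)) + (sv {2} ^ Suc (\<alpha> i) * tv {2} ^ Suc (\<alpha> j)) + (sv {1} ^ Suc (\<alpha> i) * tv {1} ^ Suc (\<alpha> j)) - (sv {} ^ Suc (\<alpha> i) * tv {} ^ Suc (\<alpha> j))))"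
  proof -
    have "a {1,2,3} = F {1,2,3} - F {2,3} - F {1,3} - F {1,2} + F {3} + F {2} + F {1} - F {}" unfolding Fa combo_vals by (simp add: algebra_simps)
    also have "\<dots> = (\<Sum>\<alpha>\<in>I_set n. b \<alpha> * ((sv {1,2,3} ^ Suc (\<alpha> i) * tv {1,2,3} ^ Suc (\<alpha> j)) - (sv {2,3} ^ Suc (\<alpha> i) * tv {2,3} ^ Suc (\<alpha> j)) - (sv {1,3} ^ Suc (\<alpha> i) * tv {1,3} ^ Suc (\<alpha> j)) - (sv {1,2} ^ Suc (\<alpha> i) * tv {1,2} ^ Suc (\<alpha> j)) + (sv {3} ^ Suc (\<alpha> i) * tv {3} ^ Suc (\<alpha> j)) + (sv {2} ^ Suc (\<alpha> i) * tv {2} ^ Suc (\<alpha> j)) + (sv {1} ^ Suc (\<alpha> i) * tv {1} ^ Suc (\<alpha> j)) - (sv {} ^ Suc (\<alpha> i) * tv {} ^ Suc (\<alpha> j))))"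
      unfolding Fval[OF in_P4(12)] Fval[OF in_P4(9)] Fval[OF in_P4(7)] Fval[OF in_P4(6)] Fval[OF in_P4(4)] Fval[OF in_P4(3)] Fval[OF in_P4(2)] Fval[OF in_P4(1)] by (simp add: sum_subtractf sum.distrib algebra_simps)
    finally show ?thesis .
  qed
  have n3: "\<forall>\<alpha>\<in>I_set n. (4::8) dvd (((sv {1,2,3} ^ Suc (\<alpha> i) * tv {1,2,3} ^ Suc (\<alpha> j)) - (sv {2,3} ^ Suc (\<alpha> i) * tv {2,3} ^ Suc (\<alpha> j)) - (sv {1,3} ^ Suc (\<alpha> i) * tv {1,3} ^ Suc (\<alpha> j)) - (sv {1,2} ^ Suc (\<alpha> i) * tv {1,2} ^ Suc (\<alpha> j)) + (sv {3} ^ Suc (\<alpha> i) * tv {3} ^ Suc (\<alpha> j)) + (sv {2} ^ Suc (\<alpha> i) * tv {2} ^ Suc (\<alpha> j)) + (sv {1} ^ Suc (\<alpha> i) * tv {1} ^ Suc (\<alpha> j)) - (sv {} ^ Suc (\<alpha> i) * tv {} ^ Suc (\<alpha> j))) - 2 * (Bf 2 (\<alpha> i) * Bf 0 (\<alpha> j)))"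
  proof
    fix \<alpha> assume "\<alpha> \<in> I_set n"
    then have "\<alpha> i = 0 \<or> \<alpha> i = 1 \<or> \<alpha> i = 2" "\<alpha> j = 0 \<or> \<alpha> j = 1 \<or> \<alpha> j = 2"
      using rng by force+
    then show "(4::8) dvd (((sv {1,2,3} ^ Suc (\<alpha> i) * tv {1,2,3} ^ Suc (\<alpha> j)) - (sv {2,3} ^ Suc (\<alpha> i) * tv {2,3} ^ Suc (\<alpha> j)) - (sv {1,3} ^ Suc (\<alpha> i) * tv {1,3} ^ Suc (\<alpha> j)) - (sv {1,2} ^ Suc (\<alpha> i) * tv {1,2} ^ Suc (\<alpha> j)) + (sv {3} ^ Suc (\<alpha> i) * tv {3} ^ Suc (\<alpha> j)) + (sv {2} ^ Suc (\<alpha> i) * tv {2} ^ Suc (\<alpha> j)) + (sv {1} ^ Suc (\<alpha> i) * tv {1} ^ Suc (\<alpha> j)) - (sv {} ^ Suc (\<alpha> i) * tv {} ^ Suc (\<alpha> j))) - 2 * (Bf 2 (\<alpha> i) * Bf 0 (\<alpha> j)))"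
      by (elim disjE) (simp_all add: sv_def tv_def Bf_def dvd2_8 dvd4_8)
  qed
  have d3: "4 dvd a {1,2,3}" by (rule use_ball[OF c3 in_P4(12)]) simp
  have r3: "2 dvd (\<Sum>\<alpha>\<in>I_set n. b \<alpha> * (Bf 2 (\<alpha> i) * Bf 0 (\<alpha> j)))"
    using d3 unfolding e3 by (rule L_mod4[OF n3])
  have e4: "a {1,3,4} = (\<Sum>\<alpha>\<in>I_set n. b \<alpha> * ((sv {1,3,4} ^ Suc (\<alpha> i) * tv {1,3,4} ^ Suc (\<alpha> j)) - (sv {3,4} ^ Suc (\<alpha> i) * tv {3,4} ^ Suc (\<alpha> j)) - (sv {1,4} ^ Suc (\<alpha> i) * tv {1,4} ^ Suc (\<alpha> j)) - (sv {1,3} ^ Suc (\<alpha> i) * tv {1,3} ^ Suc (\<alpha> j)) + (sv {4} ^ Suc (\<alpha> i) * tv {4} ^ Suc (\<alpha> j)) + (sv {3} ^ Suc (\<alpha> i) * tv {3} ^ Suc (\<alpha> j)) + (sv {1} ^ Suc (\<alpha> i) * tv {1} ^ Suc (\<alpha> j)) - (sv {} ^ Suc (\<alpha> i) * tv {} ^ Suc (\<alpha> j))))"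
  proof -
    have "a {1,3,4} = F {1,3,4} - F {3,4} - F {1,4} - F {1,3} + F {4} + F {3} + F {1} - F {}" unfolding Fa combo_vals by (simp add: algebra_simps)
    also have "\<dots> = (\<Sum>\<alpha>\<in>I_set n. b \<alpha> * ((sv {1,3,4} ^ Suc (\<alpha> i) * tv {1,3,4} ^ Suc (\<alpha> j)) - (sv {3,4} ^ Suc (\<alpha> i) * tv {3,4} ^ Suc (\<alpha> j)) - (sv {1,4} ^ Suc (\<alpha> i) * tv {1,4} ^ Suc (\<alpha> j)) - (sv {1,3} ^ Suc (\<alpha> i) * tv {1,3} ^ Suc (\<alpha> j)) + (sv {4} ^ Suc (\<alpha> i) * tv {4} ^ Suc (\<alpha> j)) + (sv {3} ^ Suc (\<alpha> i) * tv {3} ^ Suc (\<alpha> j)) + (sv {1} ^ Suc (\<alpha> i) * tv {1} ^ Suc (\<alpha> j)) - (sv {} ^ Suc (\<alpha> i) * tv {} ^ Suc (\<alpha> j))))"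
      unfolding Fval[OF in_P4(14)] Fval[OF in_P4(11)] Fval[OF in_P4(8)] Fval[OF in_P4(7)] Fval[OF in_P4(5)] Fval[OF in_P4(4)] Fval[OF in_P4(2)] Fval[OF in_P4(1)] by (simp add: sum_subtractf sum.distrib algebra_simps)
    finally show ?thesis .
  qed
  have n4: "\<forall>\<alpha>\<in>I_set n. (4::8) dvd (((sv {1,3,4} ^ Suc (\<alpha> i) * tv {1,3,4} ^ Suc (\<alpha> j)) - (sv {3,4} ^ Suc (\<alpha> i) * tv {3,4} ^ Suc (\<alpha> j)) - (sv {1,4} ^ Suc (\<alpha> i) * tv {1,4} ^ Suc (\<alpha> j)) - (sv {1,3} ^ Suc (\<alpha> i) * tv {1,3} ^ Suc (\<alpha> j)) + (sv {4} ^ Suc (\<alpha> i) * tv {4} ^ Suc (\<alpha> j)) + (sv {3} ^ Suc (\<alpha> i) * tv {3} ^ Suc (\<alpha> j)) + (sv {1} ^ Suc (\<alpha> i) * tv {1} ^ Suc (\<alpha> j)) - (sv {} ^ Suc (\<alpha> i) * tv {} ^ Suc (\<alpha> j))) - 2 * (Bf 0 (\<alpha> i) * Bf 2 (\<alpha> j)))"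
  proof
    fix \<alpha> assume "\<alpha> \<in> I_set n"
    then have "\<alpha> i = 0 \<or> \<alpha> i = 1 \<or> \<alpha> i = 2" "\<alpha> j = 0 \<or> \<alpha> j = 1 \<or> \<alpha> j = 2"
      using rng by force+
    then show "(4::8) dvd (((sv {1,3,4} ^ Suc (\<alpha> i) * tv {1,3,4} ^ Suc (\<alpha> j)) - (sv {3,4} ^ Suc (\<alpha> i) * tv {3,4} ^ Suc (\<alpha> j)) - (sv {1,4} ^ Suc (\<alpha> i) * tv {1,4} ^ Suc (\<alpha> j)) - (sv {1,3} ^ Suc (\<alpha> i) * tv {1,3} ^ Suc (\<alpha> j)) + (sv {4} ^ Suc (\<alpha> i) * tv {4} ^ Suc (\<alpha> j)) + (sv {3} ^ Suc (\<alpha> i) * tv {3} ^ Suc (\<alpha> j)) + (sv {1} ^ Suc (\<alpha> i) * tv {1} ^ Suc (\<alpha> j)) - (sv {} ^ Suc (\<alpha> i) * tv {} ^ Suc (\<alpha> j))) - 2 * (Bf 0 (\<alpha> i) * Bf 2 (\<alpha> j)))"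
      by (elim disjE) (simp_all add: sv_def tv_def Bf_def dvd2_8 dvd4_8)
  qed
  have d4: "4 dvd a {1,3,4}" by (rule use_ball[OF c3 in_P4(14)]) simp
  have r4: "2 dvd (\<Sum>\<alpha>\<in>I_set n. b \<alpha> * (Bf 0 (\<alpha> i) * Bf 2 (\<alpha> j)))"
    using d4 unfolding e4 by (rule L_mod4[OF n4])
  have e5: "a {2,4} = (\<Sum>\<alpha>\<in>I_set n. b \<alpha> * ((sv {2,4} ^ Suc (\<alpha> i) * tv {2,4} ^ Suc (\<alpha> j)) - (sv {4} ^ Suc (\<alpha> i) * tv {4} ^ Suc (\<alpha> j)) - (sv {2} ^ Suc (\<alpha> i) * tv {2} ^ Suc (\<alpha> j)) + (sv {} ^ Suc (\<alpha> i) * tv {} ^ Suc (\<alpha> j))))"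
  proof -
    have "a {2,4} = F {2,4} - F {4} - F {2} + F {}" unfolding Fa combo_vals by (simp add: algebra_simps)
    also have "\<dots> = (\<Sum>\<alpha>\<in>I_set n. b \<alpha> * ((sv {2,4} ^ Suc (\<alpha> i) * tv {2,4} ^ Suc (\<alpha> j)) - (sv {4} ^ Suc (\<alpha> i) * tv {4} ^ Suc (\<alpha> j)) - (sv {2} ^ Suc (\<alpha> i) * tv {2} ^ Suc (\<alpha> j)) + (sv {} ^ Suc (\<alpha> i) * tv {} ^ Suc (\<alpha> j))))"
      unfolding Fval[OF in_P4(10)] Fval[OF in_P4(5)] Fval[OF in_P4(3)] Fval[OF in_P4(1)] by (simp add: sum_subtractf sum.distrib algebra_simps)
    finally show ?thesis .
  qed
  have n5: "\<forall>\<alpha>\<in>I_set n. ((sv {2,4} ^ Suc (\<alpha> i) * tv {2,4} ^ Suc (\<alpha> j)) - (sv {4} ^ Suc (\<alpha> i) * tv {4} ^ Suc (\<alpha> j)) - (sv {2} ^ Suc (\<alpha> i) * tv {2} ^ Suc (\<alpha> j)) + (sv {} ^ Suc (\<alpha> i) * tv {} ^ Suc (\<alpha> j))) = 4 * (Bf 1 (\<alpha> i) * Bf 1 (\<alpha> j))"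
  proof
    fix \<alpha> assume "\<alpha> \<in> I_set n"
    then have "\<alpha> i = 0 \<or> \<alpha> i = 1 \<or> \<alpha> i = 2" "\<alpha> j = 0 \<or> \<alpha> j = 1 \<or> \<alpha> j = 2"
      using rng by force+
    then show "((sv {2,4} ^ Suc (\<alpha> i) * tv {2,4} ^ Suc (\<alpha> j)) - (sv {4} ^ Suc (\<alpha> i) * tv {4} ^ Suc (\<alpha> j)) - (sv {2} ^ Suc (\<alpha> i) * tv {2} ^ Suc (\<alpha> j)) + (sv {} ^ Suc (\<alpha> i) * tv {} ^ Suc (\<alpha> j))) = 4 * (Bf 1 (\<alpha> i) * Bf 1 (\<alpha> j))"
      by (elim disjE) (simp_all add: sv_def tv_def Bf_def dvd2_8 dvd4_8)
  qed
  have d5: "a {2,4} = 0" by (rule use_ball[OF c4 in_P4(10)]) simp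
  have r5: "2 dvd (\<Sum>\<alpha>\<in>I_set n. b \<alpha> * (Bf 1 (\<alpha> i) * Bf 1 (\<alpha> j)))"
    using d5 unfolding e5 by (rule L_mod8[OF n5])
  have e6: "a {1,2,4} = (\<Sum>\<alpha>\<in>I_set n. b \<alpha> * ((sv {1,2,4} ^ Suc (\<alpha> i) * tv {1,2,4} ^ Suc (\<alpha> j)) - (sv {2,4} ^ Suc (\<alpha> i) * tv {2,4} ^ Suc (\<alpha> j)) - (sv {1,4} ^ Suc (\<alpha> i) * tv {1,4} ^ Suc (\<alpha> j)) - (sv {1,2} ^ Suc (\<alpha> i) * tv {1,2} ^ Suc (\<alpha> j)) + (sv {4} ^ Suc (\<alpha> i) * tv {4} ^ Suc (\<alpha> j)) + (sv {2} ^ Suc (\<alpha> i) * tv {2} ^ Suc (\<alpha> j)) + (sv {1} ^ Suc (\<alpha> i) * tv {1} ^ Suc (\<alpha> j)) - (sv {} ^ Suc (\<alpha> i) * tv {} ^ Suc (\<alpha> j))))"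
  proof -
    have "a {1,2,4} = F {1,2,4} - F {2,4} - F {1,4} - F {1,2} + F {4} + F {2} + F {1} - F {}" unfolding Fa combo_vals by (simp add: algebra_simps)
    also have "\<dots> = (\<Sum>\<alpha>\<in>I_set n. b \<alpha> * ((sv {1,2,4} ^ Suc (\<alpha> i) * tv {1,2,4} ^ Suc (\<alpha> j)) - (sv {2,4} ^ Suc (\<alpha> i) * tv {2,4} ^ Suc (\<alpha> j)) - (sv {1,4} ^ Suc (\<alpha> i) * tv {1,4} ^ Suc (\<alpha> j)) - (sv {1,2} ^ Suc (\<alpha> i) * tv {1,2} ^ Suc (\<alpha> j)) + (sv {4} ^ Suc (\<alpha> i) * tv {4} ^ Suc (\<alpha> j)) + (sv {2} ^ Suc (\<alpha> i) * tv {2} ^ Suc (\<alpha> j)) + (sv {1} ^ Suc (\<alpha> i) * tv {1} ^ Suc (\<alpha> j)) - (sv {} ^ Suc (\<alpha> i) * tv {} ^ Suc (\<alpha> j))))"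
      unfolding Fval[OF in_P4(13)] Fval[OF in_P4(10)] Fval[OF in_P4(8)] Fval[OF in_P4(6)] Fval[OF in_P4(5)] Fval[OF in_P4(3)] Fval[OF in_P4(2)] Fval[OF in_P4(1)] by (simp add: sum_subtractf sum.distrib algebra_simps)
    finally show ?thesis .
  qed
  have n6: "\<forall>\<alpha>\<in>I_set n. ((sv {1,2,4} ^ Suc (\<alpha> i) * tv {1,2,4} ^ Suc (\<alpha> j)) - (sv {2,4} ^ Suc (\<alpha> i) * tv {2,4} ^ Suc (\<alpha> j)) - (sv {1,4} ^ Suc (\<alpha> i) * tv {1,4} ^ Suc (\<alpha> j)) - (sv {1,2} ^ Suc (\<alpha> i) * tv {1,2} ^ Suc (\<alpha> j)) + (sv {4} ^ Suc (\<alpha> i) * tv {4} ^ Suc (\<alpha> j)) + (sv {2} ^ Suc (\<alpha> i) * tv {2} ^ Suc (\<alpha> j)) + (sv {1} ^ Suc (\<alpha> i) * tv {1} ^ Suc (\<alpha> j)) - (sv {} ^ Suc (\<alpha> i) * tv {} ^ Suc (\<alpha> j))) = 4 * (Bf 2 (\<alpha> i) * Bf 1 (\<alpha> j))"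
  proof
    fix \<alpha> assume "\<alpha> \<in> I_set n"
    then have "\<alpha> i = 0 \<or> \<alpha> i = 1 \<or> \<alpha> i = 2" "\<alpha> j = 0 \<or> \<alpha> j = 1 \<or> \<alpha> j = 2"
      using rng by force+
    then show "((sv {1,2,4} ^ Suc (\<alpha> i) * tv {1,2,4} ^ Suc (\<alpha> j)) - (sv {2,4} ^ Suc (\<alpha> i) * tv {2,4} ^ Suc (\<alpha> j)) - (sv {1,4} ^ Suc (\<alpha> i) * tv {1,4} ^ Suc (\<alpha> j)) - (sv {1,2} ^ Suc (\<alpha> i) * tv {1,2} ^ Suc (\<alpha> j)) + (sv {4} ^ Suc (\<alpha> i) * tv {4} ^ Suc (\<alpha> j)) + (sv {2} ^ Suc (\<alpha> i) * tv {2} ^ Suc (\<alpha> j)) + (sv {1} ^ Suc (\<alpha> i) * tv {1} ^ Suc (\<alpha> j)) - (sv {} ^ Suc (\<alpha> i) * tv {} ^ Suc (\<alpha> j))) = 4 * (Bf 2 (\<alpha> i) * Bf 1 (\<alpha> j))"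
      by (elim disjE) (simp_all add: sv_def tv_def Bf_def dvd2_8 dvd4_8)
  qed
  have d6: "a {1,2,4} = 0" by (rule use_ball[OF c4 in_P4(13)]) simp
  have r6: "2 dvd (\<Sum>\<alpha>\<in>I_set n. b \<alpha> * (Bf 2 (\<alpha> i) * Bf 1 (\<alpha> j)))"
    using d6 unfolding e6 by (rule L_mod8[OF n6])
  have e7: "a {2,3,4} = (\<Sum>\<alpha>\<in>I_set n. b \<alpha> * ((sv {2,3,4} ^ Suc (\<alpha> i) * tv {2,3,4} ^ Suc (\<alpha> j)) - (sv {3,4} ^ Suc (\<alpha> i) * tv {3,4} ^ Suc (\<alpha> j)) - (sv {2,4} ^ Suc (\<alpha> i) * tv {2,4} ^ Suc (\<alpha> j)) - (sv {2,3} ^ Suc (\<alpha> i) * tv {2,3} ^ Suc (\<alpha> j)) + (sv {4} ^ Suc (\<alpha> i) * tv {4} ^ Suc (\<alpha> j)) + (sv {3} ^ Suc (\<alpha> i) * tv {3} ^ Suc (\<alpha> j)) + (sv {2} ^ Suc (\<alpha> i) * tv {2} ^ Suc (\<alpha> j)) - (sv {} ^ Suc (\<alpha> i) * tv {} ^ Suc (\<alpha> j))))"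
  proof -
    have "a {2,3,4} = F {2,3,4} - F {3,4} - F {2,4} - F {2,3} + F {4} + F {3} + F {2} - F {}" unfolding Fa combo_vals by (simp add: algebra_simps)
    also have "\<dots> = (\<Sum>\<alpha>\<in>I_set n. b \<alpha> * ((sv {2,3,4} ^ Suc (\<alpha> i) * tv {2,3,4} ^ Suc (\<alpha> j)) - (sv {3,4} ^ Suc (\<alpha> i) * tv {3,4} ^ Suc (\<alpha> j)) - (sv {2,4} ^ Suc (\<alpha> i) * tv {2,4} ^ Suc (\<alpha> j)) - (sv {2,3} ^ Suc (\<alpha> i) * tv {2,3} ^ Suc (\<alpha> j)) + (sv {4} ^ Suc (\<alpha> i) * tv {4} ^ Suc (\<alpha> j)) + (sv {3} ^ Suc (\<alpha> i) * tv {3} ^ Suc (\<alpha> j)) + (sv {2} ^ Suc (\<alpha> i) * tv {2} ^ Suc (\<alpha> j)) - (sv {} ^ Suc (\<alpha> i) * tv {} ^ Suc (\<alpha> j))))"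
      unfolding Fval[OF in_P4(15)] Fval[OF in_P4(11)] Fval[OF in_P4(10)] Fval[OF in_P4(9)] Fval[OF in_P4(5)] Fval[OF in_P4(4)] Fval[OF in_P4(3)] Fval[OF in_P4(1)] by (simp add: sum_subtractf sum.distrib algebra_simps)
    finally show ?thesis .
  qed
  have n7: "\<forall>\<alpha>\<in>I_set n. ((sv {2,3,4} ^ Suc (\<alpha> i) * tv {2,3,4} ^ Suc (\<alpha> j)) - (sv {3,4} ^ Suc (\<alpha> i) * tv {3,4} ^ Suc (\<alpha> j)) - (sv {2,4} ^ Suc (\<alpha> i) * tv {2,4} ^ Suc (\<alpha> j)) - (sv {2,3} ^ Suc (\<alpha> i) * tv {2,3} ^ Suc (\<alpha> j)) + (sv {4} ^ Suc (\<alpha> i) * tv {4} ^ Suc (\<alpha> j)) + (sv {3} ^ Suc (\<alpha> i) * tv {3} ^ Suc (\<alpha> j)) + (sv {2} ^ Suc (\<alpha> i) * tv {2} ^ Suc (\<alpha> j)) - (sv {} ^ Suc (\<alpha> i) * tv {} ^ Suc (\<alpha> j))) = 4 * (Bf 1 (\<alpha> i) * Bf 2 (\<alpha> j))"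
  proof
    fix \<alpha> assume "\<alpha> \<in> I_set n"
    then have "\<alpha> i = 0 \<or> \<alpha> i = 1 \<or> \<alpha> i = 2" "\<alpha> j = 0 \<or> \<alpha> j = 1 \<or> \<alpha> j = 2"
      using rng by force+
    then show "((sv {2,3,4} ^ Suc (\<alpha> i) * tv {2,3,4} ^ Suc (\<alpha> j)) - (sv {3,4} ^ Suc (\<alpha> i) * tv {3,4} ^ Suc (\<alpha> j)) - (sv {2,4} ^ Suc (\<alpha> i) * tv {2,4} ^ Suc (\<alpha> j)) - (sv {2,3} ^ Suc (\<alpha> i) * tv {2,3} ^ Suc (\<alpha> j)) + (sv {4} ^ Suc (\<alpha> i) * tv {4} ^ Suc (\<alpha> j)) + (sv {3} ^ Suc (\<alpha> i) * tv {3} ^ Suc (\<alpha> j)) + (sv {2} ^ Suc (\<alpha> i) * tv {2} ^ Suc (\<alpha> j)) - (sv {} ^ Suc (\<alpha> i) * tv {} ^ Suc (\<alpha> j))) = 4 * (Bf 1 (\<alpha> i) * Bf 2 (\<alpha> j))"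
      by (elim disjE) (simp_all add: sv_def tv_def Bf_def dvd2_8 dvd4_8)
  qed
  have d7: "a {2,3,4} = 0" by (rule use_ball[OF c4 in_P4(15)]) simp
  have r7: "2 dvd (\<Sum>\<alpha>\<in>I_set n. b \<alpha> * (Bf 1 (\<alpha> i) * Bf 2 (\<alpha> j)))"
    using d7 unfolding e7 by (rule L_mod8[OF n7])
  have e8: "a {1,2,3,4} = (\<Sum>\<alpha>\<in>I_set n. b \<alpha> * ((sv {1,2,3,4} ^ Suc (\<alpha> i) * tv {1,2,3,4} ^ Suc (\<alpha> j)) - (sv {2,3,4} ^ Suc (\<alpha> i) * tv {2,3,4} ^ Suc (\<alpha> j)) - (sv {1,3,4} ^ Suc (\<alpha> i) * tv {1,3,4} ^ Suc (\<alpha> j)) - (sv {1,2,4} ^ Suc (\<alpha> i) * tv {1,2,4} ^ Suc (\<alpha> j)) - (sv {1,2,3} ^ Suc (\<alpha> i) * tv {1,2,3} ^ Suc (\<alpha> j)) + (sv {3,4} ^ Suc (\<alpha> i) * tv {3,4} ^ Suc (\<alpha> j)) + (sv {2,4} ^ Suc (\<alpha> i) * tv {2,4} ^ Suc (\<alpha> j)) + (sv {2,3} ^ Suc (\<alpha> i) * tv {2,3} ^ Suc (\<alpha> j)) + (sv {1,4} ^ Suc (\<alpha> i) * tv {1,4} ^ Suc (\<alpha> j)) + (sv {1,3} ^ Suc (\<alpha> i) * tv {1,3} ^ Suc (\<alpha> j)) + (sv {1,2} ^ Suc (\<alpha> i) * tv {1,2} ^ Suc (\<alpha> j)) - (sv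 {4} ^ Suc (\<alpha> i) * tv {4} ^ Suc (\<alpha> j)) - (sv {3} ^ Suc (\<alpha> i) * tv {3} ^ Suc (\<alpha> j)) - (sv {2} ^ Suc (\<alpha> i) * tv {2} ^ Suc (\<alpha> j)) - (sv {1} ^ Suc (\<alpha> i) * tv {1} ^ Suc (\<alpha> j)) + (sv {} ^ Suc (\<alpha> i) * tv {} ^ Suc (\<alpha> j))))"
  proof -
    have "a {1,2,3,4} = F {1,2,3,4} - F {2,3,4} - F {1,3,4} - F {1,2,4} - F {1,2,3} + F {3,4} + F {2,4} + F {2,3} + F {1,4} + F {1,3} + F {1,2} - F {4} - F {3} - F {2} - F {1} + F {}" unfolding Fa combo_vals by (simp add: algebra_simps)
    also have "\<dots> = (\<Sum>\<alpha>\<in>I_set n. b \<alpha> * ((sv {1,2,3,4} ^ Suc (\<alpha> i) * tv {1,2,3,4} ^ Suc (\<alpha> j)) - (sv {2,3,4} ^ Suc (\<alpha> i) * tv {2,3,4} ^ Suc (\<alpha> j)) - (sv {1,3,4} ^ Suc (\<alpha> i) * tv {1,3,4} ^ Suc (\<alpha> j)) - (sv {1,2,4} ^ Suc (\<alpha> i) * tv {1,2,4} ^ Suc (\<alpha> j)) - (sv {1,2,3} ^ Suc (\<alpha> i) * tv {1,2,3} ^ Suc (\<alpha> j)) + (sv {3,4} ^ Suc (\<alpha> i) * tv {3,4} ^ Suc (\<alpha> j)) + (sv {2,4} ^ Suc (\<alpha> i) * tv {2,4} ^ Suc (\<alpha> j)) + (sv {2,3} ^ Suc (\<alpha> i) *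 tv {2,3} ^ Suc (\<alpha> j)) + (sv {1,4} ^ Suc (\<alpha> i) * tv {1,4} ^ Suc (\<alpha> j)) + (sv {1,3} ^ Suc (\<alpha> i) * tv {1,3} ^ Suc (\<alpha> j)) + (sv {1,2} ^ Suc (\<alpha> i) * tv {1,2} ^ Suc (\<alpha> j)) - (sv {4} ^ Suc (\<alpha> i) * tv {4} ^ Suc (\<alpha> j)) - (sv {3} ^ Suc (\<alpha> i) * tv {3} ^ Suc (\<alpha> j)) - (sv {2} ^ Suc (\<alpha> i) * tv {2} ^ Suc (\<alpha> j)) - (sv {1} ^ Suc (\<alpha> i) * tv {1} ^ Suc (\<alpha> j)) + (sv {} ^ Suc (\<alpha> i) * tv {} ^ Suc (\<alpha> j))))"
      unfolding Fval[OF in_P4(16)] Fval[OF in_P4(15)] Fval[OF in_P4(14)] Fval[OF in_P4(13)] Fval[OF in_P4(12)] Fval[OF in_P4(11)] Fval[OF in_P4(10)] Fval[OF in_P4(9)] Fval[OF in_P4(8)] Fval[OF in_P4(7)] Fval[OF in_P4(6)] Fval[OF in_P4(5)] Fval[OF in_P4(4)] Fval[OF in_P4(3)] Fval[OF in_P4(2)] Fval[OF in_P4(1)] by (simp add: sum_subtractf sum.distrib algebra_simps)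
    finally show ?thesis .
  qed
  have n8: "\<forall>\<alpha>\<in>I_set n. ((sv {1,2,3,4} ^ Suc (\<alpha> i) * tv {1,2,3,4} ^ Suc (\<alpha> j)) - (sv {2,3,4} ^ Suc (\<alpha> i) * tv {2,3,4} ^ Suc (\<alpha> j)) - (sv {1,3,4} ^ Suc (\<alpha> i) * tv {1,3,4} ^ Suc (\<alpha> j)) - (sv {1,2,4} ^ Suc (\<alpha> i) * tv {1,2,4} ^ Suc (\<alpha> j)) - (sv {1,2,3} ^ Suc (\<alpha> i) * tv {1,2,3} ^ Suc (\<alpha> j)) + (sv {3,4} ^ Suc (\<alpha> i) * tv {3,4} ^ Suc (\<alpha> j)) + (sv {2,4} ^ Suc (\<alpha> i) * tv {2,4} ^ Suc (\<alpha> j)) + (sv {2,3} ^ Suc (\<alpha> i) * tv {2,3} ^ Suc (\<alpha> j)) + (sv {1,4} ^ Suc (\<alpha> i) * tv {1,4} ^ Suc (\<alpha> j)) + (sv {1,3} ^ Suc (\<alpha> i) * tv {1,3} ^ Suc (\<alpha> j)) + (sv {1,2} ^ Suc (\<alpha> i) * tv {1,2} ^ Suc (\<alpha> j)) - (sv {4} ^ Suc (\<alpha> i) * tv {4} ^ Suc (\<alpha> j)) - (sv {3} ^ Suc (\<alpha> i) * tv {3} ^ Suc (\<alpha> j)) - (sv {2} ^ Suc (\<alpha> i) * tv {2} ^ Suc (\<alpha> j)) - (sv {1} ^ Suc (\<alpha> i) * tv {1} ^ Suc (\<alpha> j)) + (sv {} ^ Suc (\<alpha> i) * tv {} ^ Suc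 (\<alpha> j))) = 4 * (Bf 2 (\<alpha> i) * Bf 2 (\<alpha> j))"
  proof
    fix \<alpha> assume "\<alpha> \<in> I_set n"
    then have "\<alpha> i = 0 \<or> \<alpha> i = 1 \<or> \<alpha> i = 2" "\<alpha> j = 0 \<or> \<alpha> j = 1 \<or> \<alpha> j = 2"
      using rng by force+
    then show "((sv {1,2,3,4} ^ Suc (\<alpha> i) * tv {1,2,3,4} ^ Suc (\<alpha> j)) - (sv {2,3,4} ^ Suc (\<alpha> i) * tv {2,3,4} ^ Suc (\<alpha> j)) - (sv {1,3,4} ^ Suc (\<alpha> i) * tv {1,3,4} ^ Suc (\<alpha> j)) - (sv {1,2,4} ^ Suc (\<alpha> i) * tv {1,2,4} ^ Suc (\<alpha> j)) - (sv {1,2,3} ^ Suc (\<alpha> i) * tv {1,2,3} ^ Suc (\<alpha> j)) + (sv {3,4} ^ Suc (\<alpha> i) * tv {3,4} ^ Suc (\<alpha> j)) + (sv {2,4} ^ Suc (\<alpha> i) * tv {2,4} ^ Suc (\<alpha> j)) + (sv {2,3} ^ Suc (\<alpha> i) * tv {2,3} ^ Suc (\<alpha> j)) + (sv {1,4} ^ Suc (\<alpha> i) * tv {1,4} ^ Suc (\<alpha> j)) + (sv {1,3} ^ Suc (\<alpha> i) * tv {1,3} ^ Suc (\<alpha> j)) + (sv {1,2} ^ Suc (\<alpha> i) * tv {1,2} ^ Suc (\<alpha> j)) - (sv {4} ^ Suc (\<alpha> i) * tv {4} ^ Suc (\<alpha> j)) - (sv {3} ^ Suc (\<alpha> i) *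 tv {3} ^ Suc (\<alpha> j)) - (sv {2} ^ Suc (\<alpha> i) * tv {2} ^ Suc (\<alpha> j)) - (sv {1} ^ Suc (\<alpha> i) * tv {1} ^ Suc (\<alpha> j)) + (sv {} ^ Suc (\<alpha> i) * tv {} ^ Suc (\<alpha> j))) = 4 * (Bf 2 (\<alpha> i) * Bf 2 (\<alpha> j))"
      by (elim disjE) (simp_all add: sv_def tv_def Bf_def dvd2_8 dvd4_8)
  qed
  have d8: "a {1,2,3,4} = 0" by (rule use_ball[OF c4 in_P4(16)]) simp
  have r8: "2 dvd (\<Sum>\<alpha>\<in>I_set n. b \<alpha> * (Bf 2 (\<alpha> i) * Bf 2 (\<alpha> j)))"
    using d8 unfolding e8 by (rule L_mod8[OF n8])
  show "2 dvd (\<Sum>\<alpha>\<in>I_set n. b \<alpha> * (Bf 0 (\<alpha> i) * Bf 0 (\<alpha> j)))" "2 dvd (\<Sum>\<alpha>\<in>I_set n. b \<alpha> * (Bf 0 (\<alpha> i) * Bf 1 (\<alpha> j)))" "2 dvd (\<Sum>\<alpha>\<in>I_set n. b \<alpha> * (Bf 1 (\<alpha> i) * Bf 0 (\<alpha> j)))" "2 dvd (\<Sum>\<alpha>\<in>I_set n. b \<alpha> * (Bf 2 (\<alpha> i) * Bf 0 (\<alpha> j)))" "2 dvd (\<Sum>\<alpha>\<in>I_set n. b \<alpha> * (Bf 0 (\<alpha> i) * Bf 2 (\<alpha> j)))" "2 dvd (\<Sum>\<alpha>\<in>I_set n. b \<alpha> * (Bf 1 (\<alpha> i) * Bf 1 (\<alpha>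 j)))" "2 dvd (\<Sum>\<alpha>\<in>I_set n. b \<alpha> * (Bf 2 (\<alpha> i) * Bf 1 (\<alpha> j)))" "2 dvd (\<Sum>\<alpha>\<in>I_set n. b \<alpha> * (Bf 1 (\<alpha> i) * Bf 2 (\<alpha> j)))" "2 dvd (\<Sum>\<alpha>\<in>I_set n. b \<alpha> * (Bf 2 (\<alpha> i) * Bf 2 (\<alpha> j)))" using r0 r1 r2 r3 r4 r5 r6 r7 r8 by simp_all
qed

lemma Bf_expand:
  assumes "(x::nat) \<le> 2"
  shows "\<phi> x = \<phi> 1 * Bf 0 x + (\<phi> 0 - \<phi> 1) * Bf 1 x + (\<phi> 2 - \<phi> 0) * Bf 2 x"
proof -
  have "x = 0 \<or> x = 1 \<or> x = 2" using assms by auto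
  then show ?thesis by (elim disjE) (simp_all add: Bf_def)
qed

lemma expand9:
  "(\<Sum>\<alpha>\<in>I. b \<alpha> * ((c0 * Bf 0 (\<alpha> i) + c1 * Bf 1 (\<alpha> i) + c2 * Bf 2 (\<alpha> i))
        * (d0 * Bf 0 (\<alpha> j) + d1 * Bf 1 (\<alpha> j) + d2 * Bf 2 (\<alpha> j))))
   = c0 * d0 * S 0 0 + c0 * d1 * S 0 1 + c0 * d2 * S 0 2 + c1 * d0 * S 1 0 + c1 * d1 * S 1 1
     + c1 * d2 * S 1 2 + c2 * d0 * S 2 0 + c2 * d1 * S 2 1 + c2 * d2 * S 2 2"
  if "S = (\<lambda>p q. \<Sum>\<alpha>\<in>I. b \<alpha> * (Bf p (\<alpha> i) * Bf q (\<alpha> j)))"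
  for c0 c1 c2 d0 d1 d2 :: 8
  unfolding that by (simp add: sum.distrib sum_distrib_left algebra_simps)

lemma general:
  assumes H: "\<And>p q. p \<le> 2 \<Longrightarrow> q \<le> 2 \<Longrightarrow> 2 dvd (\<Sum>\<alpha>\<in>I. b \<alpha> * (Bf p (\<alpha> i) * Bf q (\<alpha> j)))"
    and rng: "\<And>\<alpha>. \<alpha> \<in> I \<Longrightarrow> \<alpha> i \<le> 2 \<and> \<alpha> j \<le> 2"
  shows "2 dvd (\<Sum>\<alpha>\<in>I. b \<alpha> * (\<phi> (\<alpha> i) * \<psi> (\<alpha> j)))"
proof -
  define S where "S = (\<lambda>p q. \<Sum>\<alpha>\<in>I. b \<alpha> * (Bf p (\<alpha> i) * Bf q (\<alpha> j)))"
  define c0 where "c0 = \<phi> 1"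
  define c1 where "c1 = \<phi> 0 - \<phi> 1"
  define c2 where "c2 = \<phi> 2 - \<phi> 0"
  define d0 where "d0 = \<psi> 1"
  define d1 where "d1 = \<psi> 0 - \<psi> 1"
  define d2 where "d2 = \<psi> 2 - \<psi> 0"
  have "(\<Sum>\<alpha>\<in>I. b \<alpha> * (\<phi> (\<alpha> i) * \<psi> (\<alpha> j))) =
     (\<Sum>\<alpha>\<in>I. b \<alpha> * ((c0 * Bf 0 (\<alpha> i) + c1 * Bf 1 (\<alpha> i) + c2 * Bf 2 (\<alpha> i))
        * (d0 * Bf 0 (\<alpha> j) + d1 * Bf 1 (\<alpha> j) + d2 * Bf 2 (\<alpha> j))))"
  proof (rule sum.cong)
    fix \<alpha> assume "\<alpha> \<in> I"
    then have r: "\<alpha> i \<le> 2" "\<alpha> j \<le> 2" using rng by auto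
    show "b \<alpha> * (\<phi> (\<alpha> i) * \<psi> (\<alpha> j)) = b \<alpha> * ((c0 * Bf 0 (\<alpha> i) + c1 * Bf 1 (\<alpha> i) + c2 * Bf 2 (\<alpha> i))
        * (d0 * Bf 0 (\<alpha> j) + d1 * Bf 1 (\<alpha> j) + d2 * Bf 2 (\<alpha> j)))"
      using Bf_expand[OF r(1), of \<phi>] Bf_expand[OF r(2), of \<psi>]
      unfolding c0_def c1_def c2_def d0_def d1_def d2_def by simp
  qed simp
  also have "\<dots> = c0 * d0 * S 0 0 + c0 * d1 * S 0 1 + c0 * d2 * S 0 2 + c1 * d0 * S 1 0 + c1 * d1 * S 1 1
     + c1 * d2 * S 1 2 + c2 * d0 * S 2 0 + c2 * d1 * S 2 1 + c2 * d2 * S 2 2"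
    by (rule expand9) (simp add: S_def)
  finally have eq: "(\<Sum>\<alpha>\<in>I. b \<alpha> * (\<phi> (\<alpha> i) * \<psi> (\<alpha> j))) = \<dots>" .
  have "2 dvd S p q" if "p \<le> 2" "q \<le> 2" for p q using H[OF that] unfolding S_def .
  then show ?thesis unfolding eq
    by (intro dvd_add dvd_mult) simp_all
qed

lemma Gsingle:
  assumes "finite I" "\<alpha> \<in> I" "(2::8) dvd (\<Sum>\<beta>\<in>I. b \<beta> * \<chi> \<beta>)" "\<chi> \<alpha> = 1"
    "\<forall>\<beta>\<in>I - {\<alpha>}. \<chi> \<beta> = 0 \<or> 2 dvd b \<beta>"
  shows "2 dvd b \<alpha>"
proof -
  have "(\<Sum>\<beta>\<in>I. b \<beta> * \<chi> \<beta>) = b \<alpha> * \<chi> \<alpha> + (\<Sum>\<beta>\<in>I - {\<alpha>}. b \<beta> * \<chi> \<beta>)"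
    using assms(1,2) by (rule sum.remove)
  moreover have "2 dvd (\<Sum>\<beta>\<in>I - {\<alpha>}. b \<beta> * \<chi> \<beta>)"
  proof (intro dvd_sum)
    fix \<beta> assume "\<beta> \<in> I - {\<alpha>}"
    then have "\<chi> \<beta> = 0 \<or> 2 dvd b \<beta>" using assms(5) by blast
    then show "2 dvd b \<beta> * \<chi> \<beta>" by (elim disjE) (simp_all add: dvd_mult2)
  qed
  ultimately show ?thesis using assms(3,4) by (simp add: dvd_add_left_iff)
qed

lemma I_ext:
  assumes "\<alpha> \<in> I_set n" "\<beta> \<in> I_set n" "\<forall>k\<in>{1..n}. \<alpha> k = \<beta> k"
  shows "\<alpha> = \<beta>"
proof
  fix k show "\<alpha> k = \<beta> k"
    using assms by (cases "k \<in> {1..n}") (auto simp: I_set_def)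
qed

lemma forward:
  assumes n2: "n \<ge> 2" and pres: "preserves n (fop n b)"
  shows "\<forall>\<alpha>\<in>I_set n. (2::8) dvd b \<alpha>"
proof -
  define supp where "supp \<alpha> = {k\<in>{1..n}. \<alpha> k \<noteq> 0}" for \<alpha> :: "nat \<Rightarrow> nat"
  have fs: "finite (supp \<alpha>)" for \<alpha> unfolding supp_def by simp
  have zs: "\<alpha> k = 0" if "k \<in> {1..n}" "k \<notin> supp \<alpha>" for \<alpha> k using that unfolding supp_def by auto
  have cardI: "card (supp \<alpha>) \<le> 2" if "\<alpha> \<in> I_set n" for \<alpha>
    using that by (simp add: I_set_def supp_def)
  have rng: "\<alpha> i \<le> 2 \<and> \<alpha> j \<le> 2" if "\<alpha> \<in> I_set n" for \<alpha> i j
    using that by (simp add: I_set_def)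
  have T: "2 dvd (\<Sum>\<alpha>\<in>I_set n. b \<alpha> * (\<phi> (\<alpha> i) * \<psi> (\<alpha> j)))"
    if ij: "i \<in> {1..n}" "j \<in> {1..n}" "i \<noteq> j" for i j and \<phi> \<psi> :: "nat \<Rightarrow> 8"
  proof (rule general)
    fix p q :: nat assume "p \<le> 2" "q \<le> 2"
    then have "p = 0 \<or> p = 1 \<or> p = 2" "q = 0 \<or> q = 1 \<or> q = 2" by auto
    then show "2 dvd (\<Sum>\<alpha>\<in>I_set n. b \<alpha> * (Bf p (\<alpha> i) * Bf q (\<alpha> j)))"
      using tests[OF pres ij] by (elim disjE) simp_all
  next
    fix \<alpha> assume "\<alpha> \<in> I_set n" then show "\<alpha> i \<le> 2 \<and> \<alpha> j \<le> 2" by (rule rng)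
  qed
  define ind where "ind v x = (if x = v then 1 else (0::8))" for v x :: nat
  have S1: "2 dvd b \<alpha>" if a: "\<alpha> \<in> I_set n" "card (supp \<alpha>) = 2" for \<alpha>
  proof -
    obtain i j where sij: "supp \<alpha> = {i,j}" "i \<noteq> j" using a(2) by (auto simp: card_2_iff)
    then have ij: "i \<in> {1..n}" "j \<in> {1..n}" "\<alpha> i \<noteq> 0" "\<alpha> j \<noteq> 0"
      unfolding supp_def by blast+
    show ?thesis
    proof (rule Gsingle[OF fin_I a(1) T[OF ij(1,2) sij(2), of "ind (\<alpha> i)" "ind (\<alpha> j)"]])
      show "ind (\<alpha> i) (\<alpha> i) * ind (\<alpha> j) (\<alpha> j) = 1" by (simp add: ind_def)
      show "\<forall>\<beta>\<in>I_set n - {\<alpha>}. ind (\<alpha> i) (\<beta> i) * ind (\<alpha> j) (\<beta> j) = 0 \<or> 2 dvd b \<beta>"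
      proof (intro ballI disjI1)
        fix \<beta> assume b: "\<beta> \<in> I_set n - {\<alpha>}"
        show "ind (\<alpha> i) (\<beta> i) * ind (\<alpha> j) (\<beta> j) = 0"
        proof (rule ccontr)
          assume "ind (\<alpha> i) (\<beta> i) * ind (\<alpha> j) (\<beta> j) \<noteq> 0"
          then have e: "\<beta> i = \<alpha> i" "\<beta> j = \<alpha> j" by (auto simp: ind_def split: if_splits)
          have sub: "{i,j} \<subseteq> supp \<beta>" using e ij unfolding supp_def by auto
          have "card (supp \<beta>) \<le> 2" using b cardI by blast
          moreover have "card {i,j} = 2" using sij(2) by simp
          ultimately have sb: "supp \<beta> = {i,j}" using sub fs
            by (metis card_seteq)
          have "\<forall>k\<in>{1..n}. \<alpha> k = \<beta> k"
          proof (intro ballI)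
            fix k assume k: "k \<in> {1..n}"
            show "\<alpha> k = \<beta> k"
            proof (cases "k = i \<or> k = j")
              case True then show ?thesis using e by auto
            next
              case False
              then have "k \<notin> supp \<alpha>" "k \<notin> supp \<beta>" using sij(1) sb by auto
              then show ?thesis using k unfolding supp_def by auto
            qed
          qed
          then have "\<alpha> = \<beta>" using I_ext a(1) b by blast
          then show False using b by blast
        qed
      qed
    qed
  qed
  have S2: "2 dvd b \<alpha>" if a: "\<alpha> \<in> I_set n" "card (supp \<alpha>) = 1" for \<alpha>
  proof -
    obtain i where si: "supp \<alpha> = {i}" using a(2) by (auto simp: card_1_singleton_iff)
    then have i: "i \<in> {1..n}" "\<alpha> i \<noteq> 0" unfolding supp_def by blast+
    define j where "j = (if i = 1 then 2 else (1::nat))"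
    have j: "j \<in> {1..n}" "i \<noteq> j" using n2 i(1) by (auto simp: j_def)
    have "j \<notin> supp \<alpha>" using si j(2) by simp
    then have aj: "\<alpha> j = 0" by (rule zs[OF j(1)])
    show ?thesis
    proof (rule Gsingle[OF fin_I a(1) T[OF i(1) j(1) j(2), of "ind (\<alpha> i)" "ind 0"]])
      show "ind (\<alpha> i) (\<alpha> i) * ind 0 (\<alpha> j) = 1" by (simp add: ind_def aj)
      show "\<forall>\<beta>\<in>I_set n - {\<alpha>}. ind (\<alpha> i) (\<beta> i) * ind 0 (\<beta> j) = 0 \<or> 2 dvd b \<beta>"
      proof
        fix \<beta> assume b: "\<beta> \<in> I_set n - {\<alpha>}"
        show "ind (\<alpha> i) (\<beta> i) * ind 0 (\<beta> j) = 0 \<or> 2 dvd b \<beta>"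
        proof (cases "\<beta> i = \<alpha> i")
          case False then show ?thesis by (simp add: ind_def)
        next
          case True
          have "\<not> (\<forall>k\<in>{1..n}. \<alpha> k = \<beta> k)" using I_ext a(1) b by blast
          then obtain k where k: "k \<in> {1..n}" "\<alpha> k \<noteq> \<beta> k" by blast
          then have "k \<noteq> i" using True by auto
          then have "k \<notin> supp \<alpha>" using si by simp
          then have ak: "\<alpha> k = 0" by (rule zs[OF k(1)])
          then have "\<beta> k \<noteq> 0" using k(2) by simp
          then have kb: "k \<in> supp \<beta>" using k(1) unfolding supp_def by simp
          have "\<beta> i \<noteq> 0" using True i(2) by simp
          then have ib: "i \<in> supp \<beta>" using i(1) unfolding supp_def by simp
          have "{i,k} \<subseteq> supp \<beta>" using kb ib by simp
          then have "card {i,k} \<le> card (supp \<beta>)" using fs by (rule card_mono[rotated])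
          moreover have "card {i,k} = 2" using \<open>k \<noteq> i\<close> by simp
          moreover have "card (supp \<beta>) \<le> 2" using b cardI by blast
          ultimately have "card (supp \<beta>) = 2" by simp
          then show ?thesis using S1 b by blast
        qed
      qed
    qed
  qed
  have S3: "2 dvd b \<alpha>" if a: "\<alpha> \<in> I_set n" "card (supp \<alpha>) = 0" for \<alpha>
  proof -
    have s0: "supp \<alpha> = {}" using a(2) fs by simp
    have ij: "(1::nat) \<in> {1..n}" "(2::nat) \<in> {1..n}" "(1::nat) \<noteq> 2" using n2 by auto
    have a12: "\<alpha> 1 = 0" "\<alpha> 2 = 0"
       apply (rule zs[OF ij(1)], simp add: s0)
      apply (rule zs[OF ij(2)], simp add: s0)
      done
    show ?thesis
    proof (rule Gsingle[OF fin_I a(1) T[OF ij, of "ind 0" "ind 0"]])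
      show "ind 0 (\<alpha> 1) * ind 0 (\<alpha> 2) = 1" unfolding a12 ind_def by simp
      show "\<forall>\<beta>\<in>I_set n - {\<alpha>}. ind 0 (\<beta> 1) * ind 0 (\<beta> 2) = 0 \<or> 2 dvd b \<beta>"
      proof (intro ballI disjI2)
        fix \<beta> assume b: "\<beta> \<in> I_set n - {\<alpha>}"
        have "\<not> (\<forall>k\<in>{1..n}. \<alpha> k = \<beta> k)" using I_ext a(1) b by blast
        then obtain k where k: "k \<in> {1..n}" "\<alpha> k \<noteq> \<beta> k" by blast
        have "\<alpha> k = 0" using zs[OF k(1)] s0 by simp
        then have "\<beta> k \<noteq> 0" using k(2) by simp
        then have "k \<in> supp \<beta>" using k(1) unfolding supp_def by simp
        then have "card (supp \<beta>) \<noteq> 0" using fs by auto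
        moreover have "card (supp \<beta>) \<le> 2" using b cardI by blast
        ultimately have "card (supp \<beta>) = 1 \<or> card (supp \<beta>) = 2" by auto
        then show "2 dvd b \<beta>" using S1 S2 b by blast
      qed
    qed
  qed
  show ?thesis
  proof
    fix \<alpha> assume a: "\<alpha> \<in> I_set n"
    then have "card (supp \<alpha>) = 0 \<or> card (supp \<alpha>) = 1 \<or> card (supp \<alpha>) = 2" using cardI by force
    then show "2 dvd b \<alpha>" using S1 S2 S3 a by blast
  qed
qed

theorem theorem3p1:
  fixes n :: nat and b :: "(nat \<Rightarrow> nat) \<Rightarrow> 8"
  assumes "n \<ge> 2"
  shows "preserves n (fop n b) \<longleftrightarrow> (\<forall>\<alpha>\<in>I_set n. (2::8) dvd b \<alpha>)"
  using forward[OF assms] backward by blast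

end
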